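(* Let $P$ be a directed set. Then: (1) there is a locally compact Hausdorff space $X_P$ with $P =_T \mathcal{K}(X_P)$; (2) there is a compact Hausdorff space $K_P$ and a point $x_P \in K_P$ with $P =_T \mathcal{N}_{x_P}^{K_P}$; (3) there is a topological group $G_P$ with identity $e$ such that $P =_T \mathcal{N}_e^{G_P}$; (4) there is a locally convex topological vector space $L_P$ with $P \times \omega =_T \mathcal{N}_0^{L_P}$; (5) there is a space $Y_P$ with $P =_T \mathcal{U}_{Y_P}$; (6) there is a space $Y_P$ with $P =_T \mathcal{N}_\Delta^{Y_P^2}$.
   Context: All spaces are Tychonoff. A directed set is a partially ordered set in which any two elements have a common upper bound. For directed sets $P,Q$, $P \ge_T Q$ ($Q$ is a Tukey quotient of $P$) means there is a map $\phi:P\to Q$ such that $\phi(C)$ is cofinal in $Q$ for every cofinal $C\subseteq P$; $P =_T Q$ (Tukey equivalent) means $P\ge_T Q$ and $Q \ge_T P$. $P\times\omega$ carries the product order. For a space $X$, $\mathcal{K}(X)$ is the set of compact subsets of $X$ ordered by inclusion. For $A\subseteq X$, $\mathcal{N}_A^X$ is the family of open neighborhoods of $A$ in $X$ ordered by reverse inclusion; $\mathcal{N}_x^X=\mathcal{N}_{\{x\}}^X$, and $\Delta$ denotes the diagonal of $X^2$. $\mathcal{U}_X$ is the universal (finest compatible) uniformity of $X$, ordered by reverse inclusion. *)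

theory Defs
  imports "HOL-Analysis.Analysis" "HOL-Algebra.Group"
begin

definition directed_set :: "'a set \<Rightarrow> ('a \<Rightarrow> 'a \<Rightarrow> bool) \<Rightarrow> bool" where
  "directed_set P leq \<longleftrightarrow>
     P \<noteq> {} \<and>
     (\<forall>p\<in>P. leq p p) \<and>
     (\<forall>p\<in>P. \<forall>q\<in>P. \<forall>r\<in>P. leq p q \<longrightarrow> leq q r \<longrightarrow> leq p r) \<and>
     (\<forall>p\<in>P. \<forall>q\<in>P. leq p q \<longrightarrow> leq q p \<longrightarrow> p = q) \<and>
     (\<forall>p\<in>P. \<forall>q\<in>P. \<exists>r\<in>P. leq p r \<and> leq q r)"

definition cofinal_in :: "'a set \<Rightarrow> 'a set \<Rightarrow> ('a \<Rightarrow> 'a \<Rightarrow> bool) \<Rightarrow> bool" where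
  "cofinal_in C P leq \<longleftrightarrow> C \<subseteq> P \<and> (\<forall>p\<in>P. \<exists>c\<in>C. leq p c)"

definition tukey_ge :: "'a set \<Rightarrow> ('a \<Rightarrow> 'a \<Rightarrow> bool) \<Rightarrow> 'b set \<Rightarrow> ('b \<Rightarrow> 'b \<Rightarrow> bool) \<Rightarrow> bool" where
  "tukey_ge P leP Q leQ \<longleftrightarrow>
     (\<exists>\<phi>. \<phi> ` P \<subseteq> Q \<and> (\<forall>C. cofinal_in C P leP \<longrightarrow> cofinal_in (\<phi> ` C) Q leQ))"

definition tukey_eq :: "'a set \<Rightarrow> ('a \<Rightarrow> 'a \<Rightarrow> bool) \<Rightarrow> 'b set \<Rightarrow> ('b \<Rightarrow> 'b \<Rightarrow> bool) \<Rightarrow> bool" where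
  "tukey_eq P leP Q leQ \<longleftrightarrow> tukey_ge P leP Q leQ \<and> tukey_ge Q leQ P leP"

definition times_omega :: "'a set \<Rightarrow> ('a \<times> nat) set" where
  "times_omega P = P \<times> UNIV"

definition times_omega_le :: "('a \<Rightarrow> 'a \<Rightarrow> bool) \<Rightarrow> ('a \<times> nat) \<Rightarrow> ('a \<times> nat) \<Rightarrow> bool" where
  "times_omega_le leq x y \<longleftrightarrow> leq (fst x) (fst y) \<and> snd x \<le> snd y"

definition tychonoff_space :: "'a topology \<Rightarrow> bool" where
  "tychonoff_space X \<longleftrightarrow> t1_space X \<and> completely_regular_space X"

definition compact_sets :: "'a topology \<Rightarrow> 'a set set" where
  "compact_sets X = {K. K \<subseteq> topspace X \<and> compactin X K}"

definition nbhds :: "'a topology \<Rightarrow> 'a set \<Rightarrow> 'a set set" where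
  "nbhds X A = {U. openin X U \<and> A \<subseteq> U}"

definition rev_incl :: "'a set \<Rightarrow> 'a set \<Rightarrow> bool" where
  "rev_incl U V \<longleftrightarrow> V \<subseteq> U"

definition diagonal :: "'a topology \<Rightarrow> ('a \<times> 'a) set" where
  "diagonal X = {(x, x) | x. x \<in> topspace X}"

definition topological_group :: "'b monoid \<Rightarrow> 'b topology \<Rightarrow> bool" where
  "topological_group G T \<longleftrightarrow>
     group G \<and> topspace T = carrier G \<and>
     continuous_map (prod_topology T T) T (\<lambda>(x, y). x \<otimes>\<^bsub>G\<^esub> y) \<and>
     continuous_map T T (\<lambda>x. inv\<^bsub>G\<^esub> x)"

text \<open>Real vector spaces are represented as linear subspaces V of a function space
  \<open>'b \<Rightarrow> real\<close> (every real vector space of dimension at most the cardinality of \<open>'b\<close>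
  is isomorphic to such a subspace), with pointwise operations.\<close>
definition fadd :: "('b \<Rightarrow> real) \<Rightarrow> ('b \<Rightarrow> real) \<Rightarrow> ('b \<Rightarrow> real)" where
  "fadd f g = (\<lambda>x. f x + g x)"

definition fscale :: "real \<Rightarrow> ('b \<Rightarrow> real) \<Rightarrow> ('b \<Rightarrow> real)" where
  "fscale c f = (\<lambda>x. c * f x)"

definition fzero :: "'b \<Rightarrow> real" where
  "fzero = (\<lambda>x. 0)"

definition convex_in :: "('b \<Rightarrow> real) set \<Rightarrow> bool" where
  "convex_in W \<longleftrightarrow>
     (\<forall>f\<in>W. \<forall>g\<in>W. \<forall>t::real. 0 \<le> t \<and> t \<le> 1 \<longrightarrow> fadd (fscale t f) (fscale (1 - t) g) \<in> W)"

definition locally_convex_tvs :: "('b \<Rightarrow> real) set \<Rightarrow> ('b \<Rightarrow> real) topology \<Rightarrow> bool" where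
  "locally_convex_tvs V T \<longleftrightarrow>
     fzero \<in> V \<and>
     (\<forall>f\<in>V. \<forall>g\<in>V. fadd f g \<in> V) \<and>
     (\<forall>c. \<forall>f\<in>V. fscale c f \<in> V) \<and>
     topspace T = V \<and>
     continuous_map (prod_topology T T) T (\<lambda>(f, g). fadd f g) \<and>
     continuous_map (prod_topology euclideanreal T) T (\<lambda>(c, f). fscale c f) \<and>
     (\<forall>U. openin T U \<and> fzero \<in> U \<longrightarrow>
        (\<exists>W. openin T W \<and> fzero \<in> W \<and> W \<subseteq> U \<and> convex_in W))"

definition uniformity_on :: "'a set \<Rightarrow> ('a \<times> 'a) set set \<Rightarrow> bool" where
  "uniformity_on Y \<U> \<longleftrightarrow>
     \<U> \<noteq> {} \<and>
     (\<forall>U\<in>\<U>. U \<subseteq> Y \<times> Y \<and> Id_on Y \<subseteq> U \<and> U\<inverse> \<in> \<U>) \<and>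
     (\<forall>U\<in>\<U>. \<forall>V. U \<subseteq> V \<and> V \<subseteq> Y \<times> Y \<longrightarrow> V \<in> \<U>) \<and>
     (\<forall>U\<in>\<U>. \<forall>V\<in>\<U>. U \<inter> V \<in> \<U>) \<and>
     (\<forall>U\<in>\<U>. \<exists>V\<in>\<U>. V O V \<subseteq> U)"

definition compatible_uniformity :: "'a topology \<Rightarrow> ('a \<times> 'a) set set \<Rightarrow> bool" where
  "compatible_uniformity X \<U> \<longleftrightarrow>
     uniformity_on (topspace X) \<U> \<and>
     (\<forall>S. openin X S \<longleftrightarrow> S \<subseteq> topspace X \<and> (\<forall>x\<in>S. \<exists>U\<in>\<U>. U `` {x} \<subseteq> S))"

definition universal_uniformity :: "'a topology \<Rightarrow> ('a \<times> 'a) set set \<Rightarrow> bool" where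
  "universal_uniformity X \<U> \<longleftrightarrow>
     compatible_uniformity X \<U> \<and> (\<forall>\<V>. compatible_uniformity X \<V> \<longrightarrow> \<V> \<subseteq> \<U>)"

text \<open>Universe type in which the witnessing spaces are sought.\<close>
type_synonym 'a univ = "('a \<times> nat) set set set"

end

theory Submission
  imports Defs
begin

lemma tukey_eq_sym: "tukey_eq P a Q b \<Longrightarrow> tukey_eq Q b P a"
  by (auto simp: tukey_eq_def)

lemma tukey_ge_trans:
  assumes "tukey_ge P a Q b" "tukey_ge Q b R c" shows "tukey_ge P a R c"
proof -
  obtain f where f: "f ` P \<subseteq> Q" "\<forall>C. cofinal_in C P a \<longrightarrow> cofinal_in (f ` C) Q b"
    using assms(1) unfolding tukey_ge_def by blast
  obtain g where g: "g ` Q \<subseteq> R" "\<forall>C. cofinal_in C Q b \<longrightarrow> cofinal_in (g ` C) R c"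
    using assms(2) unfolding tukey_ge_def by blast
  have "(g \<circ> f) ` P \<subseteq> R" using f g by (auto simp: image_subset_iff)
  moreover have "\<And>C. cofinal_in C P a \<Longrightarrow> cofinal_in (g ` f ` C) R c"
    using f g by blast
  then have "\<forall>C. cofinal_in C P a \<longrightarrow> cofinal_in ((g \<circ> f) ` C) R c"
    by (simp add: image_image)
  ultimately show ?thesis unfolding tukey_ge_def by blast
qed

lemma tukey_eq_trans: "tukey_eq P a Q b \<Longrightarrow> tukey_eq Q b R c \<Longrightarrow> tukey_eq P a R c"
  unfolding tukey_eq_def by (meson tukey_ge_trans)

lemma tukey_eq_embed:
  assumes BQ: "\<forall>p\<in>A. B p \<in> Q"
    and mono: "\<forall>p\<in>A. \<forall>p'\<in>A. la p p' \<longrightarrow> lq (B p) (B p')"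
    and refl: "\<forall>p\<in>A. \<forall>p'\<in>A. lq (B p) (B p') \<longrightarrow> la p p'"
    and cof: "\<forall>q\<in>Q. \<exists>p\<in>A. lq q (B p)"
    and trans: "\<forall>x\<in>Q. \<forall>y\<in>Q. \<forall>z\<in>Q. lq x y \<longrightarrow> lq y z \<longrightarrow> lq x z"
  shows "tukey_eq A la Q lq"
proof -
  have "tukey_ge A la Q lq"
    unfolding tukey_ge_def
  proof (intro exI[of _ B] conjI allI impI)
    show "B ` A \<subseteq> Q" using BQ by auto
    fix C assume C: "cofinal_in C A la"
    show "cofinal_in (B ` C) Q lq"
      unfolding cofinal_in_def
    proof (intro conjI ballI)
      show "B ` C \<subseteq> Q" using C BQ by (auto simp: cofinal_in_def)
      fix q assume q: "q \<in> Q"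
      then obtain p where p: "p \<in> A" "lq q (B p)" using cof by blast
      then obtain c where c: "c \<in> C" "la p c" using C by (auto simp: cofinal_in_def)
      have cA: "c \<in> A" using C c by (auto simp: cofinal_in_def)
      have "lq (B p) (B c)" using mono p cA c by blast
      then have "lq q (B c)" using trans q p BQ cA by blast
      then show "\<exists>x\<in>B ` C. lq q x" using c by blast
    qed
  qed
  moreover have "tukey_ge Q lq A la"
    unfolding tukey_ge_def
  proof (intro exI[of _ "\<lambda>q. SOME p. p \<in> A \<and> lq q (B p)"] conjI allI impI)
    let ?psi = "\<lambda>q. SOME p. p \<in> A \<and> lq q (B p)"
    have psi: "?psi q \<in> A \<and> lq q (B (?psi q))" if "q \<in> Q" for q
      using someI_ex[of "\<lambda>p. p \<in> A \<and> lq q (B p)"] cof that by blast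
    show "?psi ` Q \<subseteq> A" using psi by auto
    fix C assume C: "cofinal_in C Q lq"
    show "cofinal_in (?psi ` C) A la"
      unfolding cofinal_in_def
    proof (intro conjI ballI)
      show "?psi ` C \<subseteq> A" using C psi by (auto simp: cofinal_in_def)
      fix a assume a: "a \<in> A"
      then obtain c where c: "c \<in> C" "lq (B a) c" using C BQ a unfolding cofinal_in_def by blast
      have cQ: "c \<in> Q" using C c by (auto simp: cofinal_in_def)
      have "lq (B a) (B (?psi c))" using trans c cQ psi[OF cQ] BQ a by blast
      then have "la a (?psi c)" using refl a psi[OF cQ] by blast
      then show "\<exists>x\<in>?psi ` C. la a x" using c by blast
    qed
  qed
  ultimately show ?thesis unfolding tukey_eq_def by blast
qed

lemma rev_incl_trans: "\<forall>x\<in>Q. \<forall>y\<in>Q. \<forall>z\<in>Q. rev_incl x y \<longrightarrow> rev_incl y z \<longrightarrow> rev_incl x z"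
  by (auto simp: rev_incl_def)

section \<open>Topologies from directed families of pseudometrics\<close>

definition pball :: "('i \<Rightarrow> 'x \<Rightarrow> 'x \<Rightarrow> real) \<Rightarrow> 'x set \<Rightarrow> 'i \<Rightarrow> 'x \<Rightarrow> real \<Rightarrow> 'x set" where
  "pball d V i x r = {y\<in>V. d i x y < r}"

definition pfam :: "'i set \<Rightarrow> ('i \<Rightarrow> 'x \<Rightarrow> 'x \<Rightarrow> real) \<Rightarrow> 'x set \<Rightarrow> bool" where
  "pfam I d V \<longleftrightarrow> I \<noteq> {} \<and> (\<forall>i\<in>I. \<forall>x\<in>V. d i x x = 0)
     \<and> (\<forall>i\<in>I. \<forall>x\<in>V. \<forall>y\<in>V. d i x y = d i y x)
     \<and> (\<forall>i\<in>I. \<forall>x\<in>V. \<forall>y\<in>V. \<forall>z\<in>V. d i x z \<le> d i x y + d i y z)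
     \<and> (\<forall>i\<in>I. \<forall>j\<in>I. \<exists>k\<in>I. \<forall>x\<in>V. \<forall>y\<in>V. d i x y \<le> d k x y \<and> d j x y \<le> d k x y)"

definition popen :: "'i set \<Rightarrow> ('i \<Rightarrow> 'x \<Rightarrow> 'x \<Rightarrow> real) \<Rightarrow> 'x set \<Rightarrow> 'x set \<Rightarrow> bool" where
  "popen I d V U \<longleftrightarrow> U \<subseteq> V \<and> (\<forall>x\<in>U. \<exists>i\<in>I. \<exists>r>0. pball d V i x r \<subseteq> U)"

definition ptop :: "'i set \<Rightarrow> ('i \<Rightarrow> 'x \<Rightarrow> 'x \<Rightarrow> real) \<Rightarrow> 'x set \<Rightarrow> 'x topology" where
  "ptop I d V = topology (popen I d V)"

lemma istopology_popen:
  assumes "pfam I d V" shows "istopology (popen I d V)"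
  unfolding istopology_def
proof (intro conjI allI impI)
  fix S T assume S: "popen I d V S" and T: "popen I d V T"
  show "popen I d V (S \<inter> T)"
    unfolding popen_def
  proof (intro conjI ballI)
    show "S \<inter> T \<subseteq> V" using S by (auto simp: popen_def)
    fix x assume x: "x \<in> S \<inter> T"
    obtain i r where i: "i \<in> I" "r > 0" "pball d V i x r \<subseteq> S" using S x by (auto simp: popen_def)
    obtain j s where j: "j \<in> I" "s > 0" "pball d V j x s \<subseteq> T" using T x by (auto simp: popen_def)
    obtain k where k: "k \<in> I" "\<forall>x\<in>V. \<forall>y\<in>V. d i x y \<le> d k x y \<and> d j x y \<le> d k x y"
      using assms i j unfolding pfam_def by blast
    have xV: "x \<in> V" using S x by (auto simp: popen_def)
    have "pball d V k x (min r s) \<subseteq> S \<inter> T"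
      using i(3) j(3) k(2) xV by (force simp: pball_def)
    then show "\<exists>i\<in>I. \<exists>r>0. pball d V i x r \<subseteq> S \<inter> T" using k i j by (intro bexI[of _ k] exI[of _ "min r s"]) auto
  qed
next
  fix K assume K: "\<forall>S\<in>K. popen I d V S"
  show "popen I d V (\<Union>K)"
    unfolding popen_def
  proof (intro conjI ballI)
    show "\<Union>K \<subseteq> V" using K by (auto simp: popen_def)
    fix x assume "x \<in> \<Union>K"
    then obtain S where "S \<in> K" "x \<in> S" by blast
    then obtain i r where "i \<in> I" "r > 0" "pball d V i x r \<subseteq> S" using K unfolding popen_def by blast
    then show "\<exists>i\<in>I. \<exists>r>0. pball d V i x r \<subseteq> \<Union>K" using \<open>S \<in> K\<close> by blast
  qed
qed

lemma openin_ptop: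
  assumes "pfam I d V"
  shows "openin (ptop I d V) U \<longleftrightarrow> U \<subseteq> V \<and> (\<forall>x\<in>U. \<exists>i\<in>I. \<exists>r>0. pball d V i x r \<subseteq> U)"
  using istopology_popen[OF assms] by (simp add: ptop_def popen_def)

lemma topspace_ptop:
  assumes "pfam I d V" shows "topspace (ptop I d V) = V"
proof -
  obtain i where "i \<in> I" using assms by (auto simp: pfam_def)
  then have "openin (ptop I d V) V"
    using assms by (auto simp: openin_ptop pball_def intro!: exI[of _ 1])
  moreover have "topspace (ptop I d V) \<subseteq> V"
    using assms by (auto simp: topspace_def openin_ptop)
  ultimately show ?thesis by (meson openin_subset subset_antisym)
qed

lemma pball_centre:
  assumes "pfam I d V" "i \<in> I" "x \<in> V" "r > 0" shows "x \<in> pball d V i x r"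
  using assms by (auto simp: pfam_def pball_def)

lemma pd_nonneg:
  assumes "pfam I d V" "i \<in> I" "x \<in> V" "y \<in> V" shows "0 \<le> d i x y"
proof -
  have "d i x x \<le> d i x y + d i y x" using assms unfolding pfam_def by blast
  then show ?thesis using assms unfolding pfam_def by force
qed

lemma pball_open:
  assumes "pfam I d V" "i \<in> I" "x \<in> V"
  shows "openin (ptop I d V) (pball d V i x r)"
  unfolding openin_ptop[OF assms(1)]
proof (intro conjI ballI)
  show "pball d V i x r \<subseteq> V" by (auto simp: pball_def)
  fix y assume y: "y \<in> pball d V i x r"
  have "pball d V i y (r - d i x y) \<subseteq> pball d V i x r"
  proof
    fix z assume z: "z \<in> pball d V i y (r - d i x y)"
    have "d i x z \<le> d i x y + d i y z" using assms y z unfolding pfam_def pball_def by blast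
    then show "z \<in> pball d V i x r" using z by (auto simp: pball_def)
  qed
  moreover have "r - d i x y > 0" using y by (auto simp: pball_def)
  ultimately show "\<exists>j\<in>I. \<exists>s>0. pball d V j y s \<subseteq> pball d V i x r" using assms(2) by blast
qed

lemma t1_ptop:
  assumes "pfam I d V" "\<forall>x\<in>V. \<forall>y\<in>V. x \<noteq> y \<longrightarrow> (\<exists>i\<in>I. d i x y > 0)"
  shows "t1_space (ptop I d V)"
  unfolding t1_space_def topspace_ptop[OF assms(1)]
proof (intro ballI impI)
  fix x y assume xy: "x \<in> V" "y \<in> V" "x \<noteq> y"
  then obtain i where i: "i \<in> I" "d i x y > 0" using assms(2) by blast
  show "\<exists>U. openin (ptop I d V) U \<and> x \<in> U \<and> y \<notin> U"
    using pball_open[OF assms(1) i(1) xy(1), of "d i x y"] pball_centre[OF assms(1) i(1) xy(1) i(2)]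
    by (auto simp: pball_def)
qed

lemma min1_lip: "\<bar>min 1 a - min 1 b\<bar> \<le> \<bar>a - b\<bar>" for a b :: real
  by (simp add: min_def abs_if)

lemma completely_regular_ptop:
  assumes "pfam I d V"
  shows "completely_regular_space (ptop I d V)"
  unfolding completely_regular_space_alt'
proof (intro allI impI)
  fix S x assume S: "openin (ptop I d V) S" and x: "x \<in> S"
  then obtain i r where i: "i \<in> I" "r > 0" "pball d V i x r \<subseteq> S"
    using assms by (auto simp: openin_ptop)
  have xV: "x \<in> V" using S x assms by (auto simp: openin_ptop)
  define f where "f y = min 1 (d i x y / r)" for y
  have "continuous_map (ptop I d V) euclideanreal f"
    unfolding continuous_map_def
  proof (intro conjI allI impI)
    show "f \<in> topspace (ptop I d V) \<rightarrow> topspace euclideanreal" by simp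
    fix U :: "real set" assume "openin euclideanreal U"
    then have U: "open U" by simp
    show "openin (ptop I d V) {y \<in> topspace (ptop I d V). f y \<in> U}"
      unfolding openin_ptop[OF assms] topspace_ptop[OF assms]
    proof (intro conjI ballI)
      show "{y \<in> V. f y \<in> U} \<subseteq> V" by auto
      fix y assume y: "y \<in> {y \<in> V. f y \<in> U}"
      then obtain e where e: "e > 0" "ball (f y) e \<subseteq> U" using U open_contains_ball by blast
      have "pball d V i y (r * e) \<subseteq> {y \<in> V. f y \<in> U}"
      proof
        fix z assume z: "z \<in> pball d V i y (r * e)"
        have zV: "z \<in> V" using z by (auto simp: pball_def)
        have t1: "d i x z \<le> d i x y + d i y z" "d i x y \<le> d i x z + d i z y"
          using assms xV y zV i unfolding pfam_def by blast+
        have "d i z y = d i y z" using assms y zV i unfolding pfam_def by blast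
        then have "\<bar>d i x z - d i x y\<bar> \<le> d i y z" using t1 by linarith
        then have "\<bar>d i x z / r - d i x y / r\<bar> \<le> d i y z / r" using i(2)
          by (simp add: diff_divide_distrib[symmetric] divide_right_mono)
        moreover have "d i y z / r < e" using z i(2) by (simp add: pball_def divide_less_eq mult.commute)
        ultimately have "\<bar>f z - f y\<bar> < e" unfolding f_def using min1_lip
          by (meson order_le_less_trans)
        then have "f z \<in> ball (f y) e" by (simp add: dist_real_def abs_minus_commute)
        then show "z \<in> {y \<in> V. f y \<in> U}" using e zV by blast
      qed
      then show "\<exists>j\<in>I. \<exists>s>0. pball d V j y s \<subseteq> {y \<in> V. f y \<in> U}"
        using i e by (intro bexI[of _ i] exI[of _ "r * e"]) auto
    qed
  qed
  moreover have "f x = 0" using assms xV i unfolding f_def pfam_def by simp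
  moreover have "f ` (topspace (ptop I d V) - S) \<subseteq> {1}"
  proof
    fix w assume "w \<in> f ` (topspace (ptop I d V) - S)"
    then obtain y where y: "y \<in> V" "y \<notin> S" "w = f y" using topspace_ptop[OF assms] by auto
    then have "d i x y \<ge> r" using i(3) by (auto simp: pball_def)
    then show "w \<in> {1}" using y i(2) by (simp add: f_def)
  qed
  ultimately show "\<exists>f. continuous_map (ptop I d V) euclideanreal f \<and> f x = 0 \<and> f ` (topspace (ptop I d V) - S) \<subseteq> {1}"
    by blast
qed

lemma tychonoff_ptop:
  assumes "pfam I d V" "\<forall>x\<in>V. \<forall>y\<in>V. x \<noteq> y \<longrightarrow> (\<exists>i\<in>I. d i x y > 0)"
  shows "tychonoff_space (ptop I d V)"
  using assms t1_ptop completely_regular_ptop by (auto simp: tychonoff_space_def)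

definition eP :: "'a \<Rightarrow> ('a \<times> nat) set set" where "eP p = {{(p,0)}}"
definition ptY :: "'a \<Rightarrow> 'a univ" where "ptY p = {eP p}"

lemma eP_inj[simp]: "eP p = eP q \<longleftrightarrow> p = q" by (auto simp: eP_def)
lemma ptY_inj[simp]: "ptY p = ptY q \<longleftrightarrow> p = q" by (auto simp: ptY_def)
lemma ptY_ne[simp]: "ptY p \<noteq> {}" "{} \<noteq> ptY p" by (auto simp: ptY_def)

lemma directedD:
  assumes "directed_set P leq"
  shows "P \<noteq> {}" "p \<in> P \<Longrightarrow> leq p p"
    "p \<in> P \<Longrightarrow> q \<in> P \<Longrightarrow> r \<in> P \<Longrightarrow> leq p q \<Longrightarrow> leq q r \<Longrightarrow> leq p r"
    "p \<in> P \<Longrightarrow> q \<in> P \<Longrightarrow> \<exists>r\<in>P. leq p r \<and> leq q r"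
proof -
  have d: "P \<noteq> {} \<and> (\<forall>p\<in>P. leq p p) \<and>
     (\<forall>p\<in>P. \<forall>q\<in>P. \<forall>r\<in>P. leq p q \<longrightarrow> leq q r \<longrightarrow> leq p r) \<and>
     (\<forall>p\<in>P. \<forall>q\<in>P. leq p q \<longrightarrow> leq q p \<longrightarrow> p = q) \<and>
     (\<forall>p\<in>P. \<forall>q\<in>P. \<exists>r\<in>P. leq p r \<and> leq q r)"
    using assms unfolding directed_set_def .
  show "P \<noteq> {}" using d by (rule conjunct1)
  show "p \<in> P \<Longrightarrow> leq p p" using d[THEN conjunct2, THEN conjunct1] by (rule bspec)
  show "p \<in> P \<Longrightarrow> q \<in> P \<Longrightarrow> r \<in> P \<Longrightarrow> leq p q \<Longrightarrow> leq q r \<Longrightarrow> leq p r"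
  proof -
    assume h: "p \<in> P" "q \<in> P" "r \<in> P" "leq p q" "leq q r"
    have t: "\<forall>p\<in>P. \<forall>q\<in>P. \<forall>r\<in>P. leq p q \<longrightarrow> leq q r \<longrightarrow> leq p r"
      using d by (elim conjE)
    show "leq p r" using t[rule_format, OF h] .
  qed
  show "p \<in> P \<Longrightarrow> q \<in> P \<Longrightarrow> \<exists>r\<in>P. leq p r \<and> leq q r"
  proof -
    assume h: "p \<in> P" "q \<in> P"
    have t: "\<forall>p\<in>P. \<forall>q\<in>P. \<exists>r\<in>P. leq p r \<and> leq q r"
      using d by (elim conjE)
    show "\<exists>r\<in>P. leq p r \<and> leq q r" using t h by (elim ballE) auto
  qed
qed

definition Yset :: "'a set \<Rightarrow> 'a univ set" where "Yset P = insert {} (ptY ` P)"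
definition WY :: "'a set \<Rightarrow> ('a \<Rightarrow> 'a \<Rightarrow> bool) \<Rightarrow> 'a \<Rightarrow> 'a univ set" where
  "WY P leq p = insert {} (ptY ` {q\<in>P. \<not> leq q p})"
definition dY :: "'a set \<Rightarrow> ('a \<Rightarrow> 'a \<Rightarrow> bool) \<Rightarrow> 'a \<Rightarrow> 'a univ \<Rightarrow> 'a univ \<Rightarrow> real" where
  "dY P leq p a b = (if a = b \<or> (a \<in> WY P leq p \<and> b \<in> WY P leq p) then 0 else 1)"
definition BdY :: "'a set \<Rightarrow> ('a \<Rightarrow> 'a \<Rightarrow> bool) \<Rightarrow> 'a \<Rightarrow> 'a univ rel" where
  "BdY P leq p = Id_on (Yset P) \<union> WY P leq p \<times> WY P leq p"
definition Ytop :: "'a set \<Rightarrow> ('a \<Rightarrow> 'a \<Rightarrow> bool) \<Rightarrow> 'a univ topology" where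
  "Ytop P leq = ptop P (dY P leq) (Yset P)"

lemma WY_sub: "WY P leq p \<subseteq> Yset P" by (auto simp: WY_def Yset_def)

lemma WY_mono:
  assumes "directed_set P leq" "p \<in> P" "r \<in> P" "leq p r"
  shows "WY P leq r \<subseteq> WY P leq p"
proof
  fix x assume "x \<in> WY P leq r"
  then consider "x = {}" | q where "q \<in> P" "\<not> leq q r" "x = ptY q" unfolding WY_def by blast
  then show "x \<in> WY P leq p"
  proof cases
    case 1 then show ?thesis by (simp add: WY_def)
  next
    case 2
    have "\<not> leq q p" using directedD(3)[OF assms(1) 2(1) assms(2) assms(3) _ assms(4)] 2(2) by blast
    then show ?thesis using 2 by (auto simp: WY_def)
  qed
qed

lemma WY_notin: assumes "p \<in> P" "directed_set P leq" shows "ptY p \<notin> WY P leq p"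
  using directedD(2)[OF assms(2) assms(1)] by (auto simp: WY_def)

lemma dY_tri: "dY P leq i x z \<le> dY P leq i x y + dY P leq i y z"
  unfolding dY_def by (cases "x = y"; cases "y = z"; cases "x = z"; simp)

lemma dY_sym: "dY P leq i x y = dY P leq i y x"
  unfolding dY_def by (cases "x = y"; auto)

lemma pfam_Y:
  assumes "directed_set P leq"
  shows "pfam P (dY P leq) (Yset P)"
  unfolding pfam_def
proof (intro conjI ballI)
  show "P \<noteq> {}" using directedD(1)[OF assms] .
  fix i j assume i: "i \<in> P" and j: "j \<in> P"
  then obtain k where k: "k \<in> P" "leq i k" "leq j k" using directedD(4)[OF assms] by blast
  have "WY P leq k \<subseteq> WY P leq i" "WY P leq k \<subseteq> WY P leq j"
    using WY_mono[OF assms] i j k by auto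
  then show "\<exists>k\<in>P. \<forall>x\<in>Yset P. \<forall>y\<in>Yset P. dY P leq i x y \<le> dY P leq k x y \<and> dY P leq j x y \<le> dY P leq k x y"
  proof (intro bexI[of _ k] ballI conjI)
    fix x y
    assume W: "WY P leq k \<subseteq> WY P leq i" "WY P leq k \<subseteq> WY P leq j"
    show "dY P leq i x y \<le> dY P leq k x y" unfolding dY_def using W by auto
    show "dY P leq j x y \<le> dY P leq k x y" unfolding dY_def using W by auto
  qed (simp add: k(1))
next
  fix i x assume "i \<in> P" "x \<in> Yset P" then show "dY P leq i x x = 0" by (simp add: dY_def)
next
  fix i x y show "dY P leq i x y = dY P leq i y x" by (rule dY_sym)
next
  fix i x y z show "dY P leq i x z \<le> dY P leq i x y + dY P leq i y z" by (rule dY_tri)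
qed

lemma sep_Y:
  assumes "directed_set P leq"
  shows "\<forall>x\<in>Yset P. \<forall>y\<in>Yset P. x \<noteq> y \<longrightarrow> (\<exists>i\<in>P. dY P leq i x y > 0)"
proof (intro ballI impI)
  fix x y assume x: "x \<in> Yset P" and y: "y \<in> Yset P" and xy: "x \<noteq> y"
  then obtain q where q: "q \<in> P" "x = ptY q \<or> y = ptY q" by (auto simp: Yset_def)
  then have "dY P leq q x y = 1" using WY_notin[OF q(1) assms] xy by (auto simp: dY_def)
  then show "\<exists>i\<in>P. dY P leq i x y > 0" using q(1) by (metis zero_less_one)
qed

lemma topspace_Y: "directed_set P leq \<Longrightarrow> topspace (Ytop P leq) = Yset P"
  by (simp add: Ytop_def topspace_ptop pfam_Y)

lemma tychonoff_Y: "directed_set P leq \<Longrightarrow> tychonoff_space (Ytop P leq)"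
  unfolding Ytop_def by (rule tychonoff_ptop[OF pfam_Y sep_Y])

lemma dY_lt1: "dY P leq p a y < 1 \<longleftrightarrow> (a = y \<or> (a \<in> WY P leq p \<and> y \<in> WY P leq p))"
  by (simp add: dY_def)

lemma dY_0: "a = y \<or> (a \<in> WY P leq p \<and> y \<in> WY P leq p) \<Longrightarrow> dY P leq p a y = 0"
  by (simp add: dY_def)

lemma BdY_img: "y \<in> BdY P leq p `` {a} \<longleftrightarrow> (a = y \<and> a \<in> Yset P) \<or> (a \<in> WY P leq p \<and> y \<in> WY P leq p)"
  unfolding BdY_def by blast

lemma pball_Y_1:
  assumes "a \<in> Yset P"
  shows "pball (dY P leq) (Yset P) p a 1 = BdY P leq p `` {a}"
proof -
  have W: "WY P leq p \<subseteq> Yset P" by (rule WY_sub)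
  show ?thesis
  proof (rule Set.set_eqI)
    fix y show "y \<in> pball (dY P leq) (Yset P) p a 1 \<longleftrightarrow> y \<in> BdY P leq p `` {a}"
      unfolding pball_def mem_Collect_eq BdY_img dY_lt1 using assms W by blast
  qed
qed

lemma pball_Y_sup:
  assumes "a \<in> Yset P" "r > 0"
  shows "BdY P leq p `` {a} \<subseteq> pball (dY P leq) (Yset P) p a r"
proof
  fix y assume "y \<in> BdY P leq p `` {a}"
  then have y: "(a = y \<and> a \<in> Yset P) \<or> (a \<in> WY P leq p \<and> y \<in> WY P leq p)" by (simp only: BdY_img)
  have W: "WY P leq p \<subseteq> Yset P" by (rule WY_sub)
  have "dY P leq p a y = 0" using y by (intro dY_0) blast
  then show "y \<in> pball (dY P leq) (Yset P) p a r" using y W assms unfolding pball_def by auto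
qed

lemma openin_Y:
  assumes "directed_set P leq"
  shows "openin (Ytop P leq) S \<longleftrightarrow> S \<subseteq> Yset P \<and> (\<forall>x\<in>S. \<exists>p\<in>P. BdY P leq p `` {x} \<subseteq> S)"
proof
  assume S: "openin (Ytop P leq) S"
  then have SY: "S \<subseteq> Yset P" using assms by (auto simp: Ytop_def openin_ptop pfam_Y)
  show "S \<subseteq> Yset P \<and> (\<forall>x\<in>S. \<exists>p\<in>P. BdY P leq p `` {x} \<subseteq> S)"
  proof (intro conjI ballI SY)
    fix x assume x: "x \<in> S"
    then obtain p r where "p \<in> P" "r > 0" "pball (dY P leq) (Yset P) p x r \<subseteq> S"
      using S assms unfolding Ytop_def openin_ptop[OF pfam_Y[OF assms]] by blast
    then show "\<exists>p\<in>P. BdY P leq p `` {x} \<subseteq> S" using pball_Y_sup[of x P] x SY by blast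
  qed
next
  assume S: "S \<subseteq> Yset P \<and> (\<forall>x\<in>S. \<exists>p\<in>P. BdY P leq p `` {x} \<subseteq> S)"
  show "openin (Ytop P leq) S"
    unfolding Ytop_def openin_ptop[OF pfam_Y[OF assms]]
  proof (intro conjI ballI)
    show "S \<subseteq> Yset P" using S by blast
    fix x assume x: "x \<in> S"
    then obtain p where "p \<in> P" "BdY P leq p `` {x} \<subseteq> S" using S by blast
    then show "\<exists>i\<in>P. \<exists>r>0. pball (dY P leq) (Yset P) i x r \<subseteq> S"
      using pball_Y_1[of x P leq p] x S by (intro bexI[of _ p] exI[of _ 1]) auto
  qed
qed

lemma BdY_class_open:
  assumes "directed_set P leq" "p \<in> P" "a \<in> Yset P"
  shows "openin (Ytop P leq) (BdY P leq p `` {a})"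
  using pball_open[OF pfam_Y[OF assms(1)] assms(2,3), of 1] pball_Y_1[OF assms(3)]
  by (simp add: Ytop_def)

lemma BdY_mono:
  assumes "directed_set P leq" "p \<in> P" "r \<in> P" "leq p r"
  shows "BdY P leq r \<subseteq> BdY P leq p"
  using WY_mono[OF assms] by (auto simp: BdY_def)

lemma BdY_refl:
  assumes "directed_set P leq" "p \<in> P" "p' \<in> P" "BdY P leq p \<subseteq> BdY P leq p'"
  shows "leq p' p"
proof (rule ccontr)
  assume "\<not> leq p' p"
  then have "({}, ptY p') \<in> BdY P leq p" using assms by (auto simp: BdY_def WY_def)
  then have "({}, ptY p') \<in> BdY P leq p'" using assms by blast
  then have "ptY p' \<in> WY P leq p'" by (auto simp: BdY_def)
  then show False using WY_notin[OF assms(3,1)] by blast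
qed

lemma W_in_open:
  assumes "directed_set P leq" "openin (Ytop P leq) U" "{} \<in> U"
  shows "\<exists>p\<in>P. WY P leq p \<subseteq> U"
proof -
  have "U \<subseteq> Yset P \<and> (\<forall>x\<in>U. \<exists>p\<in>P. BdY P leq p `` {x} \<subseteq> U)"
    using assms(2) unfolding openin_Y[OF assms(1)] .
  then obtain p where p: "p \<in> P" "BdY P leq p `` {{}} \<subseteq> U" using assms(3) by blast
  have "WY P leq p \<subseteq> BdY P leq p `` {{}}" by (auto simp: BdY_def WY_def)
  then show ?thesis using p by blast
qed

lemma part6:
  fixes P :: "'a set"
  assumes dir: "directed_set P leq"
  shows "\<exists>Y :: 'a univ topology. tychonoff_space Y \<and>
        tukey_eq P leq (nbhds (prod_topology Y Y) (diagonal Y)) rev_incl"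
proof (intro exI[of _ "Ytop P leq"] conjI)
  let ?Y = "Ytop P leq"
  show "tychonoff_space ?Y" using tychonoff_Y[OF dir] .
  have diag: "diagonal ?Y = Id_on (Yset P)" by (auto simp: diagonal_def topspace_Y[OF dir])
  show "tukey_eq P leq (nbhds (prod_topology ?Y ?Y) (diagonal ?Y)) rev_incl"
  proof (rule tukey_eq_embed[where B = "BdY P leq"])
    show "\<forall>p\<in>P. BdY P leq p \<in> nbhds (prod_topology ?Y ?Y) (diagonal ?Y)"
    proof
      fix p assume p: "p \<in> P"
      have "openin (prod_topology ?Y ?Y) (BdY P leq p)"
        unfolding openin_prod_topology_alt
      proof (intro allI impI)
        fix a b assume ab: "(a, b) \<in> BdY P leq p"
        then have abY: "a \<in> Yset P" "b \<in> Yset P" using WY_sub[of P leq p] by (auto simp: BdY_def)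
        have "BdY P leq p `` {a} \<times> BdY P leq p `` {b} \<subseteq> BdY P leq p"
          using ab by (auto simp: BdY_def)
        moreover have "a \<in> BdY P leq p `` {a}" "b \<in> BdY P leq p `` {b}" using abY by (auto simp: BdY_def)
        ultimately show "\<exists>U V. openin ?Y U \<and> openin ?Y V \<and> a \<in> U \<and> b \<in> V \<and> U \<times> V \<subseteq> BdY P leq p"
          using BdY_class_open[OF dir p] abY by blast
      qed
      then show "BdY P leq p \<in> nbhds (prod_topology ?Y ?Y) (diagonal ?Y)"
        by (auto simp: nbhds_def diag BdY_def)
    qed
    show "\<forall>p\<in>P. \<forall>p'\<in>P. leq p p' \<longrightarrow> rev_incl (BdY P leq p) (BdY P leq p')"
      using BdY_mono[OF dir] by (auto simp: rev_incl_def)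
    show "\<forall>p\<in>P. \<forall>p'\<in>P. rev_incl (BdY P leq p) (BdY P leq p') \<longrightarrow> leq p p'"
      using BdY_refl[OF dir] by (auto simp: rev_incl_def)
    show "\<forall>q\<in>nbhds (prod_topology ?Y ?Y) (diagonal ?Y). \<exists>p\<in>P. rev_incl q (BdY P leq p)"
    proof
      fix N assume N: "N \<in> nbhds (prod_topology ?Y ?Y) (diagonal ?Y)"
      have "({}, {}) \<in> N" using N by (auto simp: nbhds_def diag Yset_def)
      then obtain U V where UV: "openin ?Y U" "openin ?Y V" "{} \<in> U" "{} \<in> V" "U \<times> V \<subseteq> N"
        using N unfolding nbhds_def openin_prod_topology_alt by blast
      then obtain p where p: "p \<in> P" "WY P leq p \<subseteq> U \<inter> V"
        using W_in_open[OF dir, of "U \<inter> V"] by blast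
      then have "BdY P leq p \<subseteq> N" using UV N by (auto simp: BdY_def nbhds_def diag)
      then show "\<exists>p\<in>P. rev_incl N (BdY P leq p)" using p by (auto simp: rev_incl_def)
    qed
  qed (rule rev_incl_trans)
qed

definition UY :: "'a set \<Rightarrow> ('a \<Rightarrow> 'a \<Rightarrow> bool) \<Rightarrow> 'a univ rel set" where
  "UY P leq = {U. U \<subseteq> Yset P \<times> Yset P \<and> (\<exists>p\<in>P. BdY P leq p \<subseteq> U)}"

lemma BdY_sub: "BdY P leq p \<subseteq> Yset P \<times> Yset P"
  using WY_sub[of P leq p] by (auto simp: BdY_def)

lemma BdY_in_UY: "p \<in> P \<Longrightarrow> BdY P leq p \<in> UY P leq"
  using BdY_sub[of P leq p] by (auto simp: UY_def)

lemma BdY_trans: "BdY P leq p O BdY P leq p \<subseteq> BdY P leq p"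
  by (auto simp: BdY_def)

lemma BdY_conv: "(BdY P leq p)\<inverse> = BdY P leq p"
  by (auto simp: BdY_def)

lemma uniformity_UY:
  assumes dir: "directed_set P leq"
  shows "uniformity_on (Yset P) (UY P leq)"
  unfolding uniformity_on_def
proof (intro conjI ballI allI impI)
  obtain p where p: "p \<in> P" using directedD(1)[OF dir] by blast
  then show "UY P leq \<noteq> {}" using BdY_in_UY[OF p, of leq] by (metis empty_iff)
next
  fix U assume U: "U \<in> UY P leq"
  then obtain p where p: "p \<in> P" "BdY P leq p \<subseteq> U" "U \<subseteq> Yset P \<times> Yset P" by (auto simp: UY_def)
  show "U \<subseteq> Yset P \<times> Yset P" using p by blast
  show "Id_on (Yset P) \<subseteq> U" using p(2) unfolding BdY_def by (rule order_trans[OF Un_upper1])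
  have "(BdY P leq p)\<inverse> \<subseteq> U\<inverse>" using p(2) by (simp only: converse_mono)
  then have "BdY P leq p \<subseteq> U\<inverse>" by (simp only: BdY_conv)
  then show "U\<inverse> \<in> UY P leq" using p by (auto simp: UY_def)
  show "\<exists>V\<in>UY P leq. V O V \<subseteq> U" using BdY_in_UY[OF p(1)] order_trans[OF BdY_trans p(2)] by blast
next
  fix U V assume U: "U \<in> UY P leq" and V: "U \<subseteq> V \<and> V \<subseteq> Yset P \<times> Yset P"
  then show "V \<in> UY P leq" by (auto simp: UY_def)
next
  fix U V assume U: "U \<in> UY P leq" and V: "V \<in> UY P leq"
  obtain p where p: "p \<in> P" "BdY P leq p \<subseteq> U" "U \<subseteq> Yset P \<times> Yset P" using U by (auto simp: UY_def)
  obtain q where q: "q \<in> P" "BdY P leq q \<subseteq> V" using V by (auto simp: UY_def)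
  obtain r where r: "r \<in> P" "leq p r" "leq q r" using directedD(4)[OF dir p(1) q(1)] by blast
  have "BdY P leq r \<subseteq> U \<inter> V" using BdY_mono[OF dir p(1) r(1) r(2)] BdY_mono[OF dir q(1) r(1) r(3)] p q by blast
  then show "U \<inter> V \<in> UY P leq" using r p by (auto simp: UY_def)
qed

lemma compatible_UY:
  assumes dir: "directed_set P leq"
  shows "compatible_uniformity (Ytop P leq) (UY P leq)"
  unfolding compatible_uniformity_def topspace_Y[OF dir]
proof (intro conjI allI uniformity_UY[OF dir])
  fix S
  show "openin (Ytop P leq) S \<longleftrightarrow> S \<subseteq> Yset P \<and> (\<forall>x\<in>S. \<exists>U\<in>UY P leq. U `` {x} \<subseteq> S)"
    unfolding openin_Y[OF dir]
  proof (intro iffI conjI ballI)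
    assume S: "S \<subseteq> Yset P \<and> (\<forall>x\<in>S. \<exists>p\<in>P. BdY P leq p `` {x} \<subseteq> S)"
    then show "S \<subseteq> Yset P" by blast
    fix x assume "x \<in> S"
    then obtain p where p: "p \<in> P" "BdY P leq p `` {x} \<subseteq> S" using S by blast
    then show "\<exists>U\<in>UY P leq. U `` {x} \<subseteq> S" using BdY_in_UY[OF p(1), of leq] by blast
  next
    assume S: "S \<subseteq> Yset P \<and> (\<forall>x\<in>S. \<exists>U\<in>UY P leq. U `` {x} \<subseteq> S)"
    then show "S \<subseteq> Yset P" by blast
    fix x assume "x \<in> S"
    then obtain U where U: "U \<in> UY P leq" "U `` {x} \<subseteq> S" using S by blast
    then obtain p where "p \<in> P" "BdY P leq p \<subseteq> U" by (auto simp: UY_def)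
    then show "\<exists>p\<in>P. BdY P leq p `` {x} \<subseteq> S" using U by blast
  qed
qed

lemma uniformity_onD:
  assumes "uniformity_on Y \<U>"
  shows "V \<in> \<U> \<Longrightarrow> V \<subseteq> Y \<times> Y" "V \<in> \<U> \<Longrightarrow> Id_on Y \<subseteq> V" "V \<in> \<U> \<Longrightarrow> V\<inverse> \<in> \<U>"
    "V \<in> \<U> \<Longrightarrow> W \<in> \<U> \<Longrightarrow> V \<inter> W \<in> \<U>"
    "V \<in> \<U> \<Longrightarrow> \<exists>W\<in>\<U>. W O W \<subseteq> V"
proof -
  have d: "\<U> \<noteq> {} \<and>
     (\<forall>U\<in>\<U>. U \<subseteq> Y \<times> Y \<and> Id_on Y \<subseteq> U \<and> U\<inverse> \<in> \<U>) \<and>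
     (\<forall>U\<in>\<U>. \<forall>V. U \<subseteq> V \<and> V \<subseteq> Y \<times> Y \<longrightarrow> V \<in> \<U>) \<and>
     (\<forall>U\<in>\<U>. \<forall>V\<in>\<U>. U \<inter> V \<in> \<U>) \<and>
     (\<forall>U\<in>\<U>. \<exists>V\<in>\<U>. V O V \<subseteq> U)" using assms unfolding uniformity_on_def .
  have d2: "\<forall>U\<in>\<U>. U \<subseteq> Y \<times> Y \<and> Id_on Y \<subseteq> U \<and> U\<inverse> \<in> \<U>" using d by (elim conjE)
  have d4: "\<forall>U\<in>\<U>. \<forall>V\<in>\<U>. U \<inter> V \<in> \<U>" using d by (elim conjE)
  have d5: "\<forall>U\<in>\<U>. \<exists>V\<in>\<U>. V O V \<subseteq> U" using d by (elim conjE)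
  show "V \<in> \<U> \<Longrightarrow> V \<subseteq> Y \<times> Y" using d2 by blast
  show "V \<in> \<U> \<Longrightarrow> Id_on Y \<subseteq> V" using d2 by blast
  show "V \<in> \<U> \<Longrightarrow> V\<inverse> \<in> \<U>" using d2 by blast
  show "V \<in> \<U> \<Longrightarrow> W \<in> \<U> \<Longrightarrow> V \<inter> W \<in> \<U>" using d4 by blast
  show "V \<in> \<U> \<Longrightarrow> \<exists>W\<in>\<U>. W O W \<subseteq> V" using d5 by blast
qed

lemma universal_UY:
  assumes dir: "directed_set P leq"
  shows "universal_uniformity (Ytop P leq) (UY P leq)"
  unfolding universal_uniformity_def
proof (intro conjI allI impI compatible_UY[OF dir] subsetI)
  fix \<V> V assume cV: "compatible_uniformity (Ytop P leq) \<V>" and V: "V \<in> \<V>"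
  have uV: "uniformity_on (Yset P) \<V>"
    using cV by (simp add: compatible_uniformity_def topspace_Y[OF dir])
  have opV: "\<And>S. openin (Ytop P leq) S \<longleftrightarrow> S \<subseteq> Yset P \<and> (\<forall>x\<in>S. \<exists>U\<in>\<V>. U `` {x} \<subseteq> S)"
    using cV by (simp add: compatible_uniformity_def topspace_Y[OF dir])
  have VY: "V \<subseteq> Yset P \<times> Yset P" and Vid: "Id_on (Yset P) \<subseteq> V"
    using uniformity_onD[OF uV] V by blast+
  obtain V1 where V1: "V1 \<in> \<V>" "V1 O V1 \<subseteq> V" using uniformity_onD(5)[OF uV V] by blast
  have "V1\<inverse> \<in> \<V>" using uniformity_onD(3)[OF uV V1(1)] .
  then have V2: "V1 \<inter> V1\<inverse> \<in> \<V>" using uniformity_onD(4)[OF uV V1(1)] by blast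
  define V2 where "V2 = V1 \<inter> V1\<inverse>"
  define S where "S = {y \<in> Yset P. \<exists>U\<in>\<V>. U `` {y} \<subseteq> V2 `` {{}}}"
  have "openin (Ytop P leq) S"
    unfolding opV
  proof (intro conjI ballI)
    show "S \<subseteq> Yset P" by (auto simp: S_def)
    fix y assume "y \<in> S"
    then obtain U where U: "U \<in> \<V>" "U `` {y} \<subseteq> V2 `` {{}}" by (auto simp: S_def)
    obtain U' where U': "U' \<in> \<V>" "U' O U' \<subseteq> U" using uniformity_onD(5)[OF uV U(1)] by blast
    have U'Y: "U' \<subseteq> Yset P \<times> Yset P" using uniformity_onD(1)[OF uV U'(1)] .
    have "U' `` {y} \<subseteq> S"
    proof
      fix z assume z: "z \<in> U' `` {y}"
      have "U' `` {z} \<subseteq> U `` {y}" using z U'(2) by blast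
      then have "U' `` {z} \<subseteq> V2 `` {{}}" using U(2) by blast
      moreover have "z \<in> Yset P" using z U'Y by blast
      ultimately show "z \<in> S" using U'(1) by (auto simp: S_def)
    qed
    then show "\<exists>U\<in>\<V>. U `` {y} \<subseteq> S" using U'(1) by blast
  qed
  moreover have "{} \<in> S"
    using V2 by (auto simp: S_def V2_def Yset_def)
  ultimately obtain p where p: "p \<in> P" "WY P leq p \<subseteq> S" using W_in_open[OF dir] by blast
  have SV2: "S \<subseteq> V2 `` {{}}"
  proof
    fix y assume "y \<in> S"
    then obtain U where U: "U \<in> \<V>" "U `` {y} \<subseteq> V2 `` {{}}" "y \<in> Yset P" by (auto simp: S_def)
    have "(y, y) \<in> U" using uniformity_onD(2)[OF uV U(1)] U(3) by blast
    then show "y \<in> V2 `` {{}}" using U by blast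
  qed
  have "BdY P leq p \<subseteq> V"
  proof
    fix ab assume ab: "ab \<in> BdY P leq p"
    show "ab \<in> V"
    proof (cases "ab \<in> Id_on (Yset P)")
      case True then show ?thesis using Vid by blast
    next
      case False
      then obtain a b where "ab = (a, b)" "a \<in> WY P leq p" "b \<in> WY P leq p" using ab by (auto simp: BdY_def)
      then have "({}, a) \<in> V2" "({}, b) \<in> V2" using p SV2 by blast+
      then have "(a, {}) \<in> V1" "({}, b) \<in> V1" by (auto simp: V2_def)
      then have "(a, b) \<in> V1 O V1" by blast
      then show ?thesis using V1 \<open>ab = (a, b)\<close> by blast
    qed
  qed
  then show "V \<in> UY P leq" using p VY by (auto simp: UY_def)
qed

lemma part5:
  fixes P :: "'a set"
  assumes dir: "directed_set P leq"
  shows "\<exists>(Y :: 'a univ topology) \<U>. tychonoff_space Y \<and> universal_uniformity Y \<U> \<and>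
        tukey_eq P leq \<U> rev_incl"
proof (intro exI[of _ "Ytop P leq"] exI[of _ "UY P leq"] conjI)
  show "tychonoff_space (Ytop P leq)" using tychonoff_Y[OF dir] .
  show "universal_uniformity (Ytop P leq) (UY P leq)" using universal_UY[OF dir] .
  show "tukey_eq P leq (UY P leq) rev_incl"
  proof (rule tukey_eq_embed[where B = "BdY P leq"])
    show "\<forall>p\<in>P. BdY P leq p \<in> UY P leq" by (simp add: BdY_in_UY)
    show "\<forall>p\<in>P. \<forall>p'\<in>P. leq p p' \<longrightarrow> rev_incl (BdY P leq p) (BdY P leq p')"
      using BdY_mono[OF dir] by (auto simp: rev_incl_def)
    show "\<forall>p\<in>P. \<forall>p'\<in>P. rev_incl (BdY P leq p) (BdY P leq p') \<longrightarrow> leq p p'"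
      using BdY_refl[OF dir] by (auto simp: rev_incl_def)
    show "\<forall>q\<in>UY P leq. \<exists>p\<in>P. rev_incl q (BdY P leq p)"
      by (auto simp: UY_def rev_incl_def)
  qed (rule rev_incl_trans)
qed

definition Gc :: "'a set \<Rightarrow> 'a univ set" where
  "Gc P = {A. finite A \<and> A \<subseteq> eP ` P}"
definition symd :: "'a univ \<Rightarrow> 'a univ \<Rightarrow> 'a univ" where
  "symd A B = (A - B) \<union> (B - A)"
definition Gm :: "'a set \<Rightarrow> 'a univ monoid" where
  "Gm P = \<lparr>carrier = Gc P, mult = symd, one = {}\<rparr>"
definition DG :: "'a set \<Rightarrow> ('a \<Rightarrow> 'a \<Rightarrow> bool) \<Rightarrow> 'a \<Rightarrow> ('a \<times> nat) set set set" where
  "DG P leq p = eP ` {q\<in>P. leq q p}"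
definition dG :: "'a set \<Rightarrow> ('a \<Rightarrow> 'a \<Rightarrow> bool) \<Rightarrow> 'a \<Rightarrow> 'a univ \<Rightarrow> 'a univ \<Rightarrow> real" where
  "dG P leq p A B = (if A \<inter> DG P leq p = B \<inter> DG P leq p then 0 else 1)"
definition Gtop :: "'a set \<Rightarrow> ('a \<Rightarrow> 'a \<Rightarrow> bool) \<Rightarrow> 'a univ topology" where
  "Gtop P leq = ptop P (dG P leq) (Gc P)"

lemma Gm_simps[simp]: "carrier (Gm P) = Gc P" "mult (Gm P) = symd" "one (Gm P) = {}"
  by (simp_all add: Gm_def)

lemma symd_Gc: "A \<in> Gc P \<Longrightarrow> B \<in> Gc P \<Longrightarrow> symd A B \<in> Gc P"
  by (auto simp: Gc_def symd_def)

lemma group_Gm: "group (Gm P)"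
proof (rule groupI)
  fix x y assume "x \<in> carrier (Gm P)" "y \<in> carrier (Gm P)"
  then show "x \<otimes>\<^bsub>Gm P\<^esub> y \<in> carrier (Gm P)" by (simp add: symd_Gc)
next
  show "\<one>\<^bsub>Gm P\<^esub> \<in> carrier (Gm P)" by (simp add: Gc_def)
next
  fix x y z show "x \<otimes>\<^bsub>Gm P\<^esub> y \<otimes>\<^bsub>Gm P\<^esub> z = x \<otimes>\<^bsub>Gm P\<^esub> (y \<otimes>\<^bsub>Gm P\<^esub> z)"
    by (auto simp: symd_def)
next
  fix x show "\<one>\<^bsub>Gm P\<^esub> \<otimes>\<^bsub>Gm P\<^esub> x = x" by (simp add: symd_def)
next
  fix x assume "x \<in> carrier (Gm P)"
  then show "\<exists>y\<in>carrier (Gm P). y \<otimes>\<^bsub>Gm P\<^esub> x = \<one>\<^bsub>Gm P\<^esub>"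
    by (intro bexI[of _ x]) (auto simp: symd_def)
qed

lemma inv_Gm: "x \<in> Gc P \<Longrightarrow> inv\<^bsub>Gm P\<^esub> x = x"
  by (rule group.inv_equality[OF group_Gm]) (simp_all add: symd_def)

lemma DG_mono:
  assumes dir: "directed_set P leq" "p \<in> P" "r \<in> P" "leq p r"
  shows "DG P leq p \<subseteq> DG P leq r"
proof
  fix x assume "x \<in> DG P leq p"
  then obtain q where q: "q \<in> P" "leq q p" "x = eP q" by (auto simp: DG_def)
  have "leq q r" using directedD(3)[OF dir(1) q(1) dir(2) dir(3) q(2) dir(4)] .
  then show "x \<in> DG P leq r" using q by (auto simp: DG_def)
qed

lemma eP_in_DG: "directed_set P leq \<Longrightarrow> p \<in> P \<Longrightarrow> eP p \<in> DG P leq p"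
  using directedD(2)[of P leq p] by (auto simp: DG_def)

lemma eP_notin_DG: "\<not> leq q p \<Longrightarrow> eP q \<notin> DG P leq p"
  by (auto simp: DG_def)

lemma pfam_G:
  assumes dir: "directed_set P leq"
  shows "pfam P (dG P leq) (Gc P)"
  unfolding pfam_def
proof (intro conjI ballI)
  show "P \<noteq> {}" using directedD(1)[OF dir] .
next
  fix i j assume i: "i \<in> P" and j: "j \<in> P"
  then obtain k where k: "k \<in> P" "leq i k" "leq j k" using directedD(4)[OF dir] by blast
  have W: "DG P leq i \<subseteq> DG P leq k" "DG P leq j \<subseteq> DG P leq k"
    using DG_mono[OF dir] i j k by auto
  show "\<exists>k\<in>P. \<forall>x\<in>Gc P. \<forall>y\<in>Gc P. dG P leq i x y \<le> dG P leq k x y \<and> dG P leq j x y \<le> dG P leq k x y"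
  proof (intro bexI[of _ k] ballI conjI)
    fix x y :: "'a univ"
    show "dG P leq i x y \<le> dG P leq k x y"
    proof (cases "x \<inter> DG P leq i = y \<inter> DG P leq i")
      case False
      then have "x \<inter> DG P leq k \<noteq> y \<inter> DG P leq k" using W(1) by blast
      then show ?thesis by (simp add: dG_def)
    qed (simp add: dG_def)
    show "dG P leq j x y \<le> dG P leq k x y"
    proof (cases "x \<inter> DG P leq j = y \<inter> DG P leq j")
      case False
      then have "x \<inter> DG P leq k \<noteq> y \<inter> DG P leq k" using W(2) by blast
      then show ?thesis by (simp add: dG_def)
    qed (simp add: dG_def)
  qed (fact k(1))
next
  fix i x show "dG P leq i x x = 0" by (simp add: dG_def)
next
  fix i x y show "dG P leq i x y = dG P leq i y x" by (simp add: dG_def eq_commute)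
next
  fix i x y z show "dG P leq i x z \<le> dG P leq i x y + dG P leq i y z"
    by (simp add: dG_def)
qed

lemma sep_G:
  assumes dir: "directed_set P leq"
  shows "\<forall>x\<in>Gc P. \<forall>y\<in>Gc P. x \<noteq> y \<longrightarrow> (\<exists>i\<in>P. dG P leq i x y > 0)"
proof (intro ballI impI)
  fix x y assume x: "x \<in> Gc P" and y: "y \<in> Gc P" and xy: "x \<noteq> y"
  then obtain z where z: "z \<in> symd x y" by (auto simp: symd_def)
  then have "z \<in> eP ` P" using x y by (auto simp: symd_def Gc_def)
  then obtain q where q: "q \<in> P" "z = eP q" by blast
  have "eP q \<in> DG P leq q" using eP_in_DG[OF dir q(1)] .
  then have "x \<inter> DG P leq q \<noteq> y \<inter> DG P leq q" using z q by (auto simp: symd_def)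
  then have "dG P leq q x y = 1" by (simp add: dG_def)
  then show "\<exists>i\<in>P. dG P leq i x y > 0" using q(1) by (metis zero_less_one)
qed

lemma topspace_G: "directed_set P leq \<Longrightarrow> topspace (Gtop P leq) = Gc P"
  by (simp add: Gtop_def topspace_ptop pfam_G)

lemma pball_G_1: "pball (dG P leq) (Gc P) p a 1 = {b \<in> Gc P. a \<inter> DG P leq p = b \<inter> DG P leq p}"
  by (auto simp: pball_def dG_def)

lemma part3:
  fixes P :: "'a set"
  assumes dir: "directed_set P leq"
  shows "\<exists>(G :: 'a univ monoid) (T :: 'a univ topology).
        topological_group G T \<and> tychonoff_space T \<and>
        tukey_eq P leq (nbhds T {\<one>\<^bsub>G\<^esub>}) rev_incl"
proof (intro exI[of _ "Gm P"] exI[of _ "Gtop P leq"] conjI)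
  have pf: "pfam P (dG P leq) (Gc P)" using pfam_G[OF dir] .
  have op: "openin (Gtop P leq) U \<longleftrightarrow> U \<subseteq> Gc P \<and> (\<forall>x\<in>U. \<exists>i\<in>P. \<exists>r>0. pball (dG P leq) (Gc P) i x r \<subseteq> U)" for U
    unfolding Gtop_def using openin_ptop[OF pf] .
  have ball_open: "openin (Gtop P leq) (pball (dG P leq) (Gc P) p a r)" if "p \<in> P" "a \<in> Gc P" for p a r
    unfolding Gtop_def using pball_open[OF pf that] .
  show "tychonoff_space (Gtop P leq)"
    unfolding Gtop_def using tychonoff_ptop[OF pf sep_G[OF dir]] .
  show "topological_group (Gm P) (Gtop P leq)"
    unfolding topological_group_def
  proof (intro conjI)
    show "group (Gm P)" by (rule group_Gm)
    show "topspace (Gtop P leq) = carrier (Gm P)" using topspace_G[OF dir] by simp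
    show "continuous_map (prod_topology (Gtop P leq) (Gtop P leq)) (Gtop P leq) (\<lambda>(x, y). x \<otimes>\<^bsub>Gm P\<^esub> y)"
      unfolding continuous_map_def
    proof (intro conjI allI impI)
      show "(\<lambda>(x, y). x \<otimes>\<^bsub>Gm P\<^esub> y) \<in> topspace (prod_topology (Gtop P leq) (Gtop P leq)) \<rightarrow> topspace (Gtop P leq)"
        using topspace_G[OF dir] symd_Gc by auto
      fix U assume U: "openin (Gtop P leq) U"
      show "openin (prod_topology (Gtop P leq) (Gtop P leq))
          {x \<in> topspace (prod_topology (Gtop P leq) (Gtop P leq)). (case x of (x, y) \<Rightarrow> x \<otimes>\<^bsub>Gm P\<^esub> y) \<in> U}"
        unfolding openin_prod_topology_alt
      proof (intro allI impI)
        fix a b assume ab: "(a, b) \<in> {x \<in> topspace (prod_topology (Gtop P leq) (Gtop P leq)). (case x of (x, y) \<Rightarrow> x \<otimes>\<^bsub>Gm P\<^esub> y) \<in> U}"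
        then have a: "a \<in> Gc P" and b: "b \<in> Gc P" and abU: "symd a b \<in> U"
          using topspace_G[OF dir] by auto
        obtain p r where p: "p \<in> P" "r > 0" "pball (dG P leq) (Gc P) p (symd a b) r \<subseteq> U"
          using U abU unfolding op by blast
        let ?A = "pball (dG P leq) (Gc P) p a 1" and ?B = "pball (dG P leq) (Gc P) p b 1"
        have "?A \<times> ?B \<subseteq> {x \<in> topspace (prod_topology (Gtop P leq) (Gtop P leq)). (case x of (x, y) \<Rightarrow> x \<otimes>\<^bsub>Gm P\<^esub> y) \<in> U}"
        proof
          fix z assume "z \<in> ?A \<times> ?B"
          then obtain a' b' where zab: "z = (a', b')" and a': "a' \<in> ?A" and b': "b' \<in> ?B" by blast
          have a'G: "a' \<in> Gc P" "a \<inter> DG P leq p = a' \<inter> DG P leq p" using a' unfolding pball_G_1 by auto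
          have b'G: "b' \<in> Gc P" "b \<inter> DG P leq p = b' \<inter> DG P leq p" using b' unfolding pball_G_1 by auto
          have "symd a b \<inter> DG P leq p = symd a' b' \<inter> DG P leq p"
            using a'G(2) b'G(2) unfolding symd_def by blast
          then have "symd a' b' \<in> pball (dG P leq) (Gc P) p (symd a b) r"
            using p(2) symd_Gc[OF a'G(1) b'G(1)] by (simp add: pball_def dG_def)
          then show "z \<in> {x \<in> topspace (prod_topology (Gtop P leq) (Gtop P leq)). (case x of (x, y) \<Rightarrow> x \<otimes>\<^bsub>Gm P\<^esub> y) \<in> U}"
            using p(3) a'G(1) b'G(1) topspace_G[OF dir] zab by auto
        qed
        moreover have "a \<in> ?A" "b \<in> ?B" using a b by (auto simp: pball_G_1)
        ultimately show "\<exists>U' V'. openin (Gtop P leq) U' \<and> openin (Gtop P leq) V' \<and> a \<in> U' \<and> b \<in> V' \<and> U' \<times> V' \<subseteq> {x \<in> topspace (prod_topology (Gtop P leq) (Gtop P leq)). (case x of (x, y) \<Rightarrow> x \<otimes>\<^bsub>Gm P\<^esub> y) \<in> U}"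
          using ball_open[OF p(1) a, of 1] ball_open[OF p(1) b, of 1] by blast
      qed
    qed
    show "continuous_map (Gtop P leq) (Gtop P leq) (\<lambda>x. inv\<^bsub>Gm P\<^esub> x)"
      by (rule continuous_map_eq[OF continuous_map_id]) (simp add: inv_Gm topspace_G[OF dir])
  qed
  show "tukey_eq P leq (nbhds (Gtop P leq) {\<one>\<^bsub>Gm P\<^esub>}) rev_incl"
  proof (rule tukey_eq_embed[where B = "\<lambda>p. pball (dG P leq) (Gc P) p {} 1"])
    have e: "{} \<in> Gc P" by (simp add: Gc_def)
    show "\<forall>p\<in>P. pball (dG P leq) (Gc P) p {} 1 \<in> nbhds (Gtop P leq) {\<one>\<^bsub>Gm P\<^esub>}"
    proof
      fix p assume p: "p \<in> P"
      show "pball (dG P leq) (Gc P) p {} 1 \<in> nbhds (Gtop P leq) {\<one>\<^bsub>Gm P\<^esub>}"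
        unfolding nbhds_def using ball_open[OF p e, of 1] e by (simp add: pball_G_1)
    qed
    show "\<forall>p\<in>P. \<forall>p'\<in>P. leq p p' \<longrightarrow> rev_incl (pball (dG P leq) (Gc P) p {} 1) (pball (dG P leq) (Gc P) p' {} 1)"
      using DG_mono[OF dir] by (fastforce simp: rev_incl_def pball_G_1)
    show "\<forall>p\<in>P. \<forall>p'\<in>P. rev_incl (pball (dG P leq) (Gc P) p {} 1) (pball (dG P leq) (Gc P) p' {} 1) \<longrightarrow> leq p p'"
    proof (intro ballI impI)
      fix p p' assume p: "p \<in> P" "p' \<in> P"
        and sub: "rev_incl (pball (dG P leq) (Gc P) p {} 1) (pball (dG P leq) (Gc P) p' {} 1)"
      show "leq p p'"
      proof (rule ccontr)
        assume np: "\<not> leq p p'"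
        have "{eP p} \<in> Gc P" using p by (simp add: Gc_def)
        then have "{eP p} \<in> pball (dG P leq) (Gc P) p' {} 1"
          using eP_notin_DG[of leq p p' P, OF np] by (simp add: pball_G_1)
        then have "{eP p} \<in> pball (dG P leq) (Gc P) p {} 1" using sub by (simp add: rev_incl_def subset_iff)
        then show False using eP_in_DG[OF dir p(1)] by (simp add: pball_G_1)
      qed
    qed
    show "\<forall>q\<in>nbhds (Gtop P leq) {\<one>\<^bsub>Gm P\<^esub>}. \<exists>p\<in>P. rev_incl q (pball (dG P leq) (Gc P) p {} 1)"
    proof
      fix N assume N: "N \<in> nbhds (Gtop P leq) {\<one>\<^bsub>Gm P\<^esub>}"
      then have "openin (Gtop P leq) N" "{} \<in> N" by (auto simp: nbhds_def)
      then obtain p r where p: "p \<in> P" "r > 0" "pball (dG P leq) (Gc P) p {} r \<subseteq> N"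
        unfolding op by blast
      have "pball (dG P leq) (Gc P) p {} 1 \<subseteq> pball (dG P leq) (Gc P) p {} r"
        using p(2) by (auto simp: pball_G_1 pball_def dG_def)
      then show "\<exists>p\<in>P. rev_incl N (pball (dG P leq) (Gc P) p {} 1)"
        using p by (auto simp: rev_incl_def)
    qed
  qed (rule rev_incl_trans)
qed

lemma transport_top:
  fixes X :: "'b topology" and f :: "'b \<Rightarrow> 'c"
  assumes inj: "inj_on f (topspace X)"
  shows "\<exists>Y. homeomorphic_map X Y f"
proof -
  define g where "g = inv_into (topspace X) f"
  define Y where "Y = pullback_topology (f ` topspace X) g X"
  have gf: "\<forall>x\<in>topspace X. g (f x) = x" using inj by (simp add: g_def)
  have tY: "topspace Y = f ` topspace X"
    using gf by (auto simp: Y_def topspace_pullback_topology)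
  have "homeomorphic_maps X Y f g"
    unfolding homeomorphic_maps_def
  proof (intro conjI)
    have "continuous_map X X (g \<circ> f)"
      by (rule continuous_map_eq[OF continuous_map_id]) (simp add: gf)
    then show "continuous_map X Y f"
      unfolding Y_def by (rule continuous_map_pullback') auto
    have "continuous_map Y X (id \<circ> g)"
      unfolding Y_def by (rule continuous_map_pullback[OF continuous_map_id])
    then show "continuous_map Y X g" by simp
    show "\<forall>x\<in>topspace X. g (f x) = x" by (fact gf)
    show "\<forall>y\<in>topspace Y. f (g y) = y" using tY by (auto simp: g_def f_inv_into_f)
  qed
  then show ?thesis using homeomorphic_maps_map by blast
qed

lemma tukey_nbhds_homeo:
  assumes hom: "homeomorphic_map X Y h" and x: "x \<in> topspace X"
  shows "tukey_eq (nbhds X {x}) rev_incl (nbhds Y {h x}) rev_incl"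
proof (rule tukey_eq_embed[where B = "\<lambda>U. h ` U"])
  have inj: "inj_on h (topspace X)" using hom homeomorphic_imp_injective_map by blast
  have cont: "continuous_map X Y h" using hom homeomorphic_imp_continuous_map by blast
  show "\<forall>p\<in>nbhds X {x}. h ` p \<in> nbhds Y {h x}"
  proof
    fix U assume U: "U \<in> nbhds X {x}"
    then have "openin X U" "x \<in> U" by (auto simp: nbhds_def)
    then show "h ` U \<in> nbhds Y {h x}"
      using homeomorphic_map_openness[OF hom openin_subset] by (auto simp: nbhds_def)
  qed
  show "\<forall>p\<in>nbhds X {x}. \<forall>p'\<in>nbhds X {x}. rev_incl p p' \<longrightarrow> rev_incl (h ` p) (h ` p')"
    by (auto simp: rev_incl_def)
  show "\<forall>p\<in>nbhds X {x}. \<forall>p'\<in>nbhds X {x}. rev_incl (h ` p) (h ` p') \<longrightarrow> rev_incl p p'"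
  proof (intro ballI impI)
    fix U V assume U: "U \<in> nbhds X {x}" and V: "V \<in> nbhds X {x}" and s: "rev_incl (h ` U) (h ` V)"
    have "U \<subseteq> topspace X" "V \<subseteq> topspace X" using U V by (auto simp: nbhds_def openin_subset)
    then show "rev_incl U V" using s inj unfolding rev_incl_def inj_on_def by blast
  qed
  show "\<forall>q\<in>nbhds Y {h x}. \<exists>p\<in>nbhds X {x}. rev_incl q (h ` p)"
  proof
    fix N assume N: "N \<in> nbhds Y {h x}"
    then have "openin Y N" "h x \<in> N" by (auto simp: nbhds_def)
    then have "{z \<in> topspace X. h z \<in> N} \<in> nbhds X {x}"
      using openin_continuous_map_preimage[OF cont] x by (auto simp: nbhds_def)
    moreover have "rev_incl N (h ` {z \<in> topspace X. h z \<in> N})" by (auto simp: rev_incl_def)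
    ultimately show "\<exists>p\<in>nbhds X {x}. rev_incl N (h ` p)" by blast
  qed
qed (rule rev_incl_trans)

lemma dir_ub:
  assumes dir: "directed_set P leq" and "finite F" "F \<subseteq> P"
  shows "\<exists>r\<in>P. \<forall>i\<in>F. leq i r"
  using assms(2,3)
proof (induction F rule: finite_induct)
  case empty
  then show ?case using directedD(1)[OF dir] by blast
next
  case (insert a F)
  then obtain r where r: "r \<in> P" "\<forall>i\<in>F. leq i r" by blast
  have a: "a \<in> P" using insert by blast
  obtain s where s: "s \<in> P" "leq a s" "leq r s" using directedD(4)[OF dir a r(1)] by blast
  have "\<forall>i\<in>F. leq i s"
  proof
    fix i assume i: "i \<in> F"
    then have "i \<in> P" using insert by blast
    then show "leq i s" using directedD(3)[OF dir _ r(1) s(1)] r(2) i s(3) by blast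
  qed
  then show ?case using s by blast
qed

definition PT :: "'a set \<Rightarrow> ('a \<Rightarrow> bool) topology" where
  "PT P = product_topology (\<lambda>_. discrete_topology UNIV) P"
definition Up :: "'a set \<Rightarrow> ('a \<Rightarrow> 'a \<Rightarrow> bool) \<Rightarrow> ('a \<Rightarrow> bool) set" where
  "Up P leq = {f \<in> PiE P (\<lambda>_. UNIV). \<forall>p\<in>P. \<forall>q\<in>P. leq p q \<longrightarrow> f p \<longrightarrow> f q}"
definition K0 :: "'a set \<Rightarrow> ('a \<Rightarrow> 'a \<Rightarrow> bool) \<Rightarrow> ('a \<Rightarrow> bool) topology" where
  "K0 P leq = subtopology (PT P) (Up P leq)"

lemma topspace_PT: "topspace (PT P) = PiE P (\<lambda>_. UNIV)"
  by (simp add: PT_def)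

lemma Up_sub: "Up P leq \<subseteq> topspace (PT P)"
  by (auto simp: Up_def topspace_PT)

lemma topspace_K0: "topspace (K0 P leq) = Up P leq"
  using Up_sub by (auto simp: K0_def)

lemma closedin_Up: "closedin (PT P) (Up P leq)"
  unfolding closedin_def
proof (intro conjI Up_sub)
  show "openin (PT P) (topspace (PT P) - Up P leq)"
    unfolding PT_def openin_product_topology_alt
  proof
    fix f assume f: "f \<in> topspace (product_topology (\<lambda>_. discrete_topology UNIV) P) - Up P leq"
    then have fE: "f \<in> PiE P (\<lambda>_. UNIV)" by simp
    then obtain p q where pq: "p \<in> P" "q \<in> P" "leq p q" "f p" "\<not> f q" using f by (auto simp: Up_def)
    define U where "U i = (if i = p then {True} else if i = q then {False} else UNIV)" for i
    have "{i \<in> P. U i \<noteq> topspace (discrete_topology UNIV)} \<subseteq> {p, q}" by (auto simp: U_def)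
    then have "finite {i \<in> P. U i \<noteq> topspace (discrete_topology UNIV)}" by (rule finite_subset) simp
    moreover have "\<forall>i\<in>P. openin (discrete_topology UNIV) (U i)" by simp
    moreover have "f \<in> PiE P U" using fE pq by (auto simp: U_def PiE_def)
    moreover have "PiE P U \<subseteq> topspace (product_topology (\<lambda>_. discrete_topology UNIV) P) - Up P leq"
    proof
      fix g assume g: "g \<in> PiE P U"
      have "p \<noteq> q" using pq by blast
      then have "g p" "\<not> g q" using g pq(1,2) by (auto simp: U_def PiE_def Pi_def)
      moreover have "g \<in> PiE P (\<lambda>_. UNIV)" using g by (auto simp: PiE_def)
      ultimately show "g \<in> topspace (product_topology (\<lambda>_. discrete_topology UNIV) P) - Up P leq"
        using pq by (auto simp: Up_def)
    qed
    ultimately show "\<exists>U. finite {i \<in> P. U i \<noteq> topspace (discrete_topology UNIV)} \<and>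
             (\<forall>i\<in>P. openin (discrete_topology UNIV) (U i)) \<and> f \<in> PiE P U \<and>
             PiE P U \<subseteq> topspace (product_topology (\<lambda>_. discrete_topology UNIV) P) - Up P leq"
      by blast
  qed
qed

lemma compact_K0: "compact_space (K0 P leq)"
proof -
  have "compact_space (PT P)"
    unfolding PT_def compact_space_product_topology by (simp add: compact_space_discrete_topology)
  then show ?thesis
    unfolding K0_def by (intro compact_space_subtopology closedin_compact_space closedin_Up)
qed

lemma Hausdorff_K0: "Hausdorff_space (K0 P leq)"
  unfolding K0_def PT_def
  by (intro Hausdorff_space_subtopology) (simp add: Hausdorff_space_product_topology)

definition x0 :: "'a set \<Rightarrow> 'a \<Rightarrow> bool" where "x0 P = restrict (\<lambda>_. False) P"

lemma x0_Up: "x0 P \<in> Up P leq"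
  by (auto simp: x0_def Up_def)

definition BK :: "'a set \<Rightarrow> ('a \<Rightarrow> 'a \<Rightarrow> bool) \<Rightarrow> 'a \<Rightarrow> ('a \<Rightarrow> bool) set" where
  "BK P leq p = {f \<in> Up P leq. \<not> f p}"

lemma tukey_K0:
  assumes dir: "directed_set P leq"
  shows "tukey_eq P leq (nbhds (K0 P leq) {x0 P}) rev_incl"
proof (rule tukey_eq_embed[where B = "BK P leq"])
  show "\<forall>p\<in>P. BK P leq p \<in> nbhds (K0 P leq) {x0 P}"
  proof
    fix p assume p: "p \<in> P"
    have "openin (PT P) {f \<in> topspace (PT P). f p \<in> {False}}"
      unfolding PT_def
      by (rule openin_continuous_map_preimage[OF continuous_map_product_projection[OF p]]) simp
    moreover have "BK P leq p = {f \<in> topspace (PT P). f p \<in> {False}} \<inter> Up P leq"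
      using Up_sub by (auto simp: BK_def)
    ultimately have "openin (K0 P leq) (BK P leq p)"
      unfolding K0_def openin_subtopology by blast
    moreover have "x0 P \<in> BK P leq p" using x0_Up p by (auto simp: BK_def x0_def)
    ultimately show "BK P leq p \<in> nbhds (K0 P leq) {x0 P}" by (simp add: nbhds_def)
  qed
  show "\<forall>p\<in>P. \<forall>p'\<in>P. leq p p' \<longrightarrow> rev_incl (BK P leq p) (BK P leq p')"
    by (auto simp: rev_incl_def BK_def Up_def)
  show "\<forall>p\<in>P. \<forall>p'\<in>P. rev_incl (BK P leq p) (BK P leq p') \<longrightarrow> leq p p'"
  proof (intro ballI impI)
    fix p p' assume p: "p \<in> P" "p' \<in> P" and s: "rev_incl (BK P leq p) (BK P leq p')"
    define f where "f = restrict (\<lambda>q. \<not> leq q p') P"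
    have "f \<in> Up P leq"
      unfolding Up_def f_def
    proof (intro CollectI conjI ballI impI)
      show "restrict (\<lambda>q. \<not> leq q p') P \<in> PiE P (\<lambda>_. UNIV)" by simp
      fix a b assume ab: "a \<in> P" "b \<in> P" "leq a b" "restrict (\<lambda>q. \<not> leq q p') P a"
      show "restrict (\<lambda>q. \<not> leq q p') P b"
      proof -
        have "\<not> leq a p'" using ab by simp
        then have "\<not> leq b p'" using directedD(3)[OF dir ab(1) ab(2) p(2) ab(3)] by blast
        then show ?thesis using ab by simp
      qed
    qed
    moreover have "\<not> f p'" using directedD(2)[OF dir p(2)] p by (simp add: f_def)
    ultimately have "f \<in> BK P leq p'" by (simp add: BK_def)
    then have "f \<in> BK P leq p" using s by (auto simp: rev_incl_def)
    then show "leq p p'" using p by (simp add: BK_def f_def)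
  qed
  show "\<forall>q\<in>nbhds (K0 P leq) {x0 P}. \<exists>p\<in>P. rev_incl q (BK P leq p)"
  proof
    fix N assume N: "N \<in> nbhds (K0 P leq) {x0 P}"
    then have "openin (K0 P leq) N" "x0 P \<in> N" by (auto simp: nbhds_def)
    then obtain U where U: "openin (PT P) U" "N = U \<inter> Up P leq"
      unfolding K0_def openin_subtopology by blast
    have "x0 P \<in> U" using U \<open>x0 P \<in> N\<close> by blast
    then obtain V where V: "finite {i \<in> P. V i \<noteq> topspace (discrete_topology UNIV)}"
        "\<forall>i\<in>P. openin (discrete_topology UNIV) (V i)" "x0 P \<in> PiE P V" "PiE P V \<subseteq> U"
      using U(1) unfolding PT_def openin_product_topology_alt by blast
    define F where "F = {i \<in> P. V i \<noteq> topspace (discrete_topology (UNIV :: bool set))}"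
    obtain r where r: "r \<in> P" "\<forall>i\<in>F. leq i r"
      using dir_ub[OF dir, of F] V(1) by (auto simp: F_def)
    have "BK P leq r \<subseteq> N"
    proof
      fix f assume f: "f \<in> BK P leq r"
      then have fU: "f \<in> Up P leq" "\<not> f r" by (auto simp: BK_def)
      have "f \<in> PiE P V"
      proof (rule PiE_I)
        fix i assume i: "i \<in> P"
        show "f i \<in> V i"
        proof (cases "i \<in> F")
          case True
          then have "leq i r" using r by blast
          then have "\<not> f i" using fU i r(1) by (auto simp: Up_def)
          moreover have "x0 P i \<in> V i" using V(3) i by (auto simp: PiE_def)
          ultimately show ?thesis using i by (simp add: x0_def)
        next
          case False
          then show ?thesis using i by (simp add: F_def)
        qed
      next
        fix i assume "i \<notin> P"
        then show "f i = undefined" using fU by (auto simp: Up_def PiE_def extensional_def)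
      qed
      then show "f \<in> N" using V(4) U(2) fU by blast
    qed
    then show "\<exists>p\<in>P. rev_incl N (BK P leq p)" using r by (auto simp: rev_incl_def)
  qed
qed (rule rev_incl_trans)

definition encK :: "'a set \<Rightarrow> ('a \<Rightarrow> bool) \<Rightarrow> 'a univ" where
  "encK P f = eP ` {p \<in> P. f p}"

lemma inj_encK: "inj_on (encK P) (topspace (K0 P leq))"
proof (rule inj_onI)
  fix f g assume f: "f \<in> topspace (K0 P leq)" and g: "g \<in> topspace (K0 P leq)" and e: "encK P f = encK P g"
  have fE: "f \<in> PiE P (\<lambda>_. UNIV)" and gE: "g \<in> PiE P (\<lambda>_. UNIV)"
    using f g by (auto simp: topspace_K0 Up_def)
  show "f = g"
  proof (rule PiE_ext[OF fE gE])
    fix i assume i: "i \<in> P"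
    have "f i \<longleftrightarrow> eP i \<in> encK P f" using i by (auto simp: encK_def)
    also have "\<dots> \<longleftrightarrow> eP i \<in> encK P g" using e by simp
    also have "\<dots> \<longleftrightarrow> g i" using i by (auto simp: encK_def)
    finally show "f i = g i" by simp
  qed
qed

lemma part12:
  fixes P :: "'a set"
  assumes dir: "directed_set P leq"
  shows "(\<exists>X :: 'a univ topology.
        tychonoff_space X \<and> locally_compact_space X \<and> Hausdorff_space X \<and>
        tukey_eq P leq (compact_sets X) (\<subseteq>))
   \<and> (\<exists>(K :: 'a univ topology) x.
        tychonoff_space K \<and> compact_space K \<and> Hausdorff_space K \<and> x \<in> topspace K \<and>
        tukey_eq P leq (nbhds K {x}) rev_incl)"
proof -
  obtain K :: "'a univ topology" where hom: "homeomorphic_map (K0 P leq) K (encK P)"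
    using transport_top[OF inj_encK] by blast
  have hs: "K0 P leq homeomorphic_space K" using homeomorphic_map_imp_homeomorphic_space[OF hom] .
  have cK: "compact_space K" using compact_K0 homeomorphic_compact_space[OF hs] by blast
  have hK: "Hausdorff_space K" using Hausdorff_K0 homeomorphic_Hausdorff_space[OF hs] by blast
  have tK: "tychonoff_space K"
    unfolding tychonoff_space_def
    using cK hK Hausdorff_imp_t1_space compact_Hausdorff_or_regular_imp_normal_space
      normal_imp_completely_regular_space by blast
  define x where "x = encK P (x0 P)"
  have x0t: "x0 P \<in> topspace (K0 P leq)" using x0_Up by (simp add: topspace_K0)
  have xK: "x \<in> topspace K"
  proof -
    have "continuous_map (K0 P leq) K (encK P)" using hom homeomorphic_imp_continuous_map by blast
    then have "encK P ` topspace (K0 P leq) \<subseteq> topspace K" by (rule continuous_map_image_subset_topspace)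
    then show ?thesis using x0t unfolding x_def by blast
  qed
  have tuk: "tukey_eq P leq (nbhds K {x}) rev_incl"
    unfolding x_def using tukey_eq_trans[OF tukey_K0[OF dir] tukey_nbhds_homeo[OF hom x0t]] .
  define X where "X = subtopology K (topspace K - {x})"
  have opn: "openin K (topspace K - {x})"
    using closedin_t1_singleton[OF Hausdorff_imp_t1_space[OF hK] xK] by (simp add: closedin_def)
  have tX: "tychonoff_space X"
    using tK unfolding X_def tychonoff_space_def
    by (simp add: t1_space_subtopology completely_regular_space_subtopology)
  have lX: "locally_compact_space X"
    unfolding X_def using locally_compact_space_open_subset[OF _ compact_imp_locally_compact_space[OF cK] opn] hK by blast
  have hX: "Hausdorff_space X" unfolding X_def using Hausdorff_space_subtopology[OF hK] .
  have tXK: "topspace X = topspace K - {x}" unfolding X_def using openin_subset[OF opn] by auto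
  have "tukey_eq (compact_sets X) (\<subseteq>) (nbhds K {x}) rev_incl"
  proof (rule tukey_eq_embed[where B = "\<lambda>C. topspace K - C"])
    show "\<forall>C\<in>compact_sets X. topspace K - C \<in> nbhds K {x}"
    proof
      fix C assume C: "C \<in> compact_sets X"
      then have "compactin K C" "C \<subseteq> topspace K - {x}"
        unfolding compact_sets_def X_def compactin_subtopology by auto
      then have "closedin K C" using compactin_imp_closedin[OF hK] by blast
      then show "topspace K - C \<in> nbhds K {x}"
        using \<open>C \<subseteq> topspace K - {x}\<close> xK by (auto simp: nbhds_def closedin_def)
    qed
    show "\<forall>p\<in>compact_sets X. \<forall>p'\<in>compact_sets X. p \<subseteq> p' \<longrightarrow> rev_incl (topspace K - p) (topspace K - p')"
      by (auto simp: rev_incl_def)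
    show "\<forall>p\<in>compact_sets X. \<forall>p'\<in>compact_sets X. rev_incl (topspace K - p) (topspace K - p') \<longrightarrow> p \<subseteq> p'"
      using tXK by (auto simp: rev_incl_def compact_sets_def)
    show "\<forall>q\<in>nbhds K {x}. \<exists>p\<in>compact_sets X. rev_incl q (topspace K - p)"
    proof
      fix N assume N: "N \<in> nbhds K {x}"
      then have "closedin K (topspace K - N)" by (auto simp: nbhds_def)
      then have "compactin K (topspace K - N)" using closedin_compact_space[OF cK] by blast
      moreover have "topspace K - N \<subseteq> topspace K - {x}" using N by (auto simp: nbhds_def)
      ultimately have "topspace K - N \<in> compact_sets X"
        unfolding compact_sets_def X_def compactin_subtopology using tXK X_def by auto
      moreover have "topspace K - (topspace K - N) = N" using N openin_subset[of K N] by (auto simp: nbhds_def)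
      ultimately show "\<exists>p\<in>compact_sets X. rev_incl N (topspace K - p)" by (auto simp: rev_incl_def)
    qed
  qed (rule rev_incl_trans)
  then have "tukey_eq P leq (compact_sets X) (\<subseteq>)"
    using tukey_eq_trans[OF tuk tukey_eq_sym] by blast
  then show ?thesis using tX lX hX tK cK hK xK tuk by blast
qed

definition supp :: "('b \<Rightarrow> real) \<Rightarrow> 'b set" where "supp f = {x. f x \<noteq> 0}"
definition DnV :: "'a set \<Rightarrow> ('a \<Rightarrow> 'a \<Rightarrow> bool) \<Rightarrow> 'a \<Rightarrow> 'a univ set" where
  "DnV P leq p = ptY ` {q \<in> P. leq q p}"
definition rho :: "'a set \<Rightarrow> ('a \<Rightarrow> 'a \<Rightarrow> bool) \<Rightarrow> 'a \<Rightarrow> ('a univ \<Rightarrow> real) \<Rightarrow> real" where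
  "rho P leq p f = (\<Sum>x \<in> DnV P leq p \<inter> supp f. \<bar>f x\<bar>)"
definition dV :: "'a set \<Rightarrow> ('a \<Rightarrow> 'a \<Rightarrow> bool) \<Rightarrow> 'a \<Rightarrow> ('a univ \<Rightarrow> real) \<Rightarrow> ('a univ \<Rightarrow> real) \<Rightarrow> real" where
  "dV P leq p f g = rho P leq p (\<lambda>x. f x - g x)"
definition VV :: "'a set \<Rightarrow> ('a univ \<Rightarrow> real) set" where
  "VV P = {f. finite (supp f) \<and> supp f \<subseteq> ptY ` P}"

lemma rho_eq:
  assumes "finite F" "supp f \<subseteq> F"
  shows "rho P leq p f = (\<Sum>x \<in> DnV P leq p \<inter> F. \<bar>f x\<bar>)"
  unfolding rho_def
  by (rule sum.mono_neutral_left) (use assms in \<open>auto simp: supp_def\<close>)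

lemma rho_nonneg: "0 \<le> rho P leq p f"
  unfolding rho_def by (rule sum_nonneg) simp

lemma supp_add: "supp (\<lambda>x. f x + g x) \<subseteq> supp f \<union> supp g"
  by (auto simp: supp_def)
lemma supp_diff: "supp (\<lambda>x. f x - g x) \<subseteq> supp f \<union> supp g"
  by (auto simp: supp_def)
lemma supp_scale: "supp (\<lambda>x. c * f x) \<subseteq> supp f"
  by (auto simp: supp_def)

lemma rho_add:
  assumes "finite (supp f)" "finite (supp g)"
  shows "rho P leq p (\<lambda>x. f x + g x) \<le> rho P leq p f + rho P leq p g"
proof -
  let ?F = "supp f \<union> supp g"
  have fin: "finite ?F" using assms by simp
  have "rho P leq p (\<lambda>x. f x + g x) = (\<Sum>x \<in> DnV P leq p \<inter> ?F. \<bar>f x + g x\<bar>)"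
    using rho_eq[OF fin supp_add] .
  also have "\<dots> \<le> (\<Sum>x \<in> DnV P leq p \<inter> ?F. \<bar>f x\<bar> + \<bar>g x\<bar>)"
    by (rule sum_mono) (rule abs_triangle_ineq)
  also have "\<dots> = (\<Sum>x \<in> DnV P leq p \<inter> ?F. \<bar>f x\<bar>) + (\<Sum>x \<in> DnV P leq p \<inter> ?F. \<bar>g x\<bar>)"
    by (rule sum.distrib)
  also have "\<dots> = rho P leq p f + rho P leq p g"
    using rho_eq[OF fin, of f P leq p] rho_eq[OF fin, of g P leq p] by simp
  finally show ?thesis .
qed

lemma rho_scale:
  assumes "finite (supp f)"
  shows "rho P leq p (\<lambda>x. c * f x) = \<bar>c\<bar> * rho P leq p f"
proof -
  have "rho P leq p (\<lambda>x. c * f x) = (\<Sum>x \<in> DnV P leq p \<inter> supp f. \<bar>c * f x\<bar>)"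
    using rho_eq[OF assms supp_scale] .
  also have "\<dots> = \<bar>c\<bar> * (\<Sum>x \<in> DnV P leq p \<inter> supp f. \<bar>f x\<bar>)"
    by (simp add: abs_mult sum_distrib_left)
  finally show ?thesis by (simp add: rho_def)
qed

lemma rho_neg: "rho P leq p (\<lambda>x. - f x) = rho P leq p f"
  by (simp add: rho_def supp_def)

lemma rho_mono:
  assumes "finite (supp f)" "DnV P leq p \<subseteq> DnV P leq q"
  shows "rho P leq p f \<le> rho P leq q f"
  unfolding rho_def
  by (rule sum_mono2) (use assms in auto)

lemma rho_point:
  assumes "finite (supp f)" "x \<in> DnV P leq p"
  shows "\<bar>f x\<bar> \<le> rho P leq p f"
proof (cases "f x = 0")
  case True then show ?thesis using rho_nonneg by simp
next
  case False
  then have "x \<in> DnV P leq p \<inter> supp f" using assms by (simp add: supp_def)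
  then show ?thesis unfolding rho_def
    by (rule member_le_sum) (use assms in auto)
qed

lemma rho_single:
  "rho P leq q (\<lambda>x. if x = ptY p then c else 0) = (if ptY p \<in> DnV P leq q then \<bar>c\<bar> else 0)"
proof -
  have "supp (\<lambda>x. if x = ptY p then c else 0) \<subseteq> {ptY p}" by (auto simp: supp_def)
  then have "rho P leq q (\<lambda>x. if x = ptY p then c else 0) = (\<Sum>x \<in> DnV P leq q \<inter> {ptY p}. \<bar>if x = ptY p then c else 0\<bar>)"
    by (rule rho_eq[OF finite.insertI[OF finite.emptyI]])
  also have "\<dots> = (if ptY p \<in> DnV P leq q then \<bar>c\<bar> else 0)"
  proof (cases "ptY p \<in> DnV P leq q")
    case True
    then have "DnV P leq q \<inter> {ptY p} = {ptY p}" by blast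
    then show ?thesis using True by simp
  next
    case False
    then have "DnV P leq q \<inter> {ptY p} = {}" by blast
    then show ?thesis using False by simp
  qed
  finally show ?thesis .
qed

lemma ptY_in_DnV: "ptY p \<in> DnV P leq q \<longleftrightarrow> p \<in> P \<and> leq p q"
  by (auto simp: DnV_def)

lemma DnV_mono:
  assumes dir: "directed_set P leq" "p \<in> P" "r \<in> P" "leq p r"
  shows "DnV P leq p \<subseteq> DnV P leq r"
proof
  fix x assume "x \<in> DnV P leq p"
  then obtain q where q: "q \<in> P" "leq q p" "x = ptY q" by (auto simp: DnV_def)
  have "leq q r" using directedD(3)[OF dir(1) q(1) dir(2) dir(3) q(2) dir(4)] .
  then show "x \<in> DnV P leq r" using q by (auto simp: DnV_def)
qed

lemma VV_fin: "f \<in> VV P \<Longrightarrow> finite (supp f)" by (simp add: VV_def)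

lemma VV_diff: "f \<in> VV P \<Longrightarrow> g \<in> VV P \<Longrightarrow> (\<lambda>x. f x - g x) \<in> VV P"
  using supp_diff[of f g] by (auto simp: VV_def intro: finite_subset)
lemma VV_add: "f \<in> VV P \<Longrightarrow> g \<in> VV P \<Longrightarrow> (\<lambda>x. f x + g x) \<in> VV P"
  using supp_add[of f g] by (auto simp: VV_def intro: finite_subset)
lemma VV_scale: "f \<in> VV P \<Longrightarrow> (\<lambda>x. c * f x) \<in> VV P"
  using supp_scale[of c f] by (auto simp: VV_def intro: finite_subset)
lemma VV_zero: "(\<lambda>x. 0) \<in> VV P"
  by (simp add: VV_def supp_def)

lemma dV_tri:
  assumes "f \<in> VV P" "g \<in> VV P" "h \<in> VV P"
  shows "dV P leq p f h \<le> dV P leq p f g + dV P leq p g h"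
proof -
  have "(\<lambda>x. f x - h x) = (\<lambda>x. (f x - g x) + (g x - h x))" by simp
  then have "dV P leq p f h = rho P leq p (\<lambda>x. (f x - g x) + (g x - h x))" by (simp add: dV_def)
  also have "\<dots> \<le> dV P leq p f g + dV P leq p g h"
    unfolding dV_def by (rule rho_add) (use VV_diff[OF assms(1,2)] VV_diff[OF assms(2,3)] VV_fin in auto)
  finally show ?thesis .
qed

lemma dV_sym: "dV P leq p f g = dV P leq p g f"
proof -
  have "(\<lambda>x. g x - f x) = (\<lambda>x. - (f x - g x))" by simp
  then show ?thesis unfolding dV_def using rho_neg[of P leq p "\<lambda>x. f x - g x"] by simp
qed

lemma dV_self: "dV P leq p f f = 0"
  by (simp add: dV_def rho_def supp_def)

lemma pfam_V:
  assumes dir: "directed_set P leq"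
  shows "pfam P (dV P leq) (VV P)"
  unfolding pfam_def
proof (intro conjI ballI)
  show "P \<noteq> {}" using directedD(1)[OF dir] .
next
  fix i j assume i: "i \<in> P" and j: "j \<in> P"
  then obtain k where k: "k \<in> P" "leq i k" "leq j k" using directedD(4)[OF dir] by blast
  have W: "DnV P leq i \<subseteq> DnV P leq k" "DnV P leq j \<subseteq> DnV P leq k"
    using DnV_mono[OF dir] i j k by auto
  show "\<exists>k\<in>P. \<forall>x\<in>VV P. \<forall>y\<in>VV P. dV P leq i x y \<le> dV P leq k x y \<and> dV P leq j x y \<le> dV P leq k x y"
  proof (intro bexI[of _ k] ballI conjI)
    fix x y assume x: "x \<in> VV P" and y: "y \<in> VV P"
    have fin: "finite (supp (\<lambda>z. x z - y z))" using VV_diff[OF x y] VV_fin by blast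
    show "dV P leq i x y \<le> dV P leq k x y" unfolding dV_def using rho_mono[OF fin W(1)] .
    show "dV P leq j x y \<le> dV P leq k x y" unfolding dV_def using rho_mono[OF fin W(2)] .
  qed (simp add: k(1))
next
  fix i x show "dV P leq i x x = 0" by (rule dV_self)
next
  fix i x y show "dV P leq i x y = dV P leq i y x" by (rule dV_sym)
next
  fix i x y z assume h: "i \<in> P" "x \<in> VV P" "y \<in> VV P" "z \<in> VV P"
  show "dV P leq i x z \<le> dV P leq i x y + dV P leq i y z" by (rule dV_tri[OF h(2) h(3) h(4)])
qed

lemma sep_V:
  assumes dir: "directed_set P leq"
  shows "\<forall>x\<in>VV P. \<forall>y\<in>VV P. x \<noteq> y \<longrightarrow> (\<exists>i\<in>P. dV P leq i x y > 0)"
proof (intro ballI impI)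
  fix f g assume f: "f \<in> VV P" and g: "g \<in> VV P" and fg: "f \<noteq> g"
  then obtain z where z: "f z \<noteq> g z" by auto
  then have "z \<in> supp f \<or> z \<in> supp g" by (auto simp: supp_def)
  then have "z \<in> ptY ` P" using f g by (auto simp: VV_def)
  then obtain q where q: "q \<in> P" "z = ptY q" by blast
  have "z \<in> DnV P leq q" using q directedD(2)[OF dir q(1)] by (simp add: ptY_in_DnV)
  then have "\<bar>f z - g z\<bar> \<le> dV P leq q f g"
    unfolding dV_def by (rule rho_point[rotated]) (use VV_diff[OF f g] VV_fin in blast)
  moreover have "\<bar>f z - g z\<bar> > 0" using z by simp
  ultimately show "\<exists>i\<in>P. dV P leq i f g > 0" using q(1) by (meson less_le_trans)
qed

lemma dV_add_le:
  assumes "a \<in> VV P" "b \<in> VV P" "a' \<in> VV P" "b' \<in> VV P"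
  shows "dV P leq p (fadd a b) (fadd a' b') \<le> dV P leq p a a' + dV P leq p b b'"
proof -
  have "(\<lambda>x. fadd a b x - fadd a' b' x) = (\<lambda>x. (a x - a' x) + (b x - b' x))"
    by (simp add: fadd_def fun_eq_iff)
  then have "dV P leq p (fadd a b) (fadd a' b') = rho P leq p (\<lambda>x. (a x - a' x) + (b x - b' x))"
    by (simp add: dV_def)
  also have "\<dots> \<le> dV P leq p a a' + dV P leq p b b'"
    unfolding dV_def by (rule rho_add) (use VV_diff[OF assms(1,3)] VV_diff[OF assms(2,4)] VV_fin in auto)
  finally show ?thesis .
qed

lemma dV_scale_le:
  assumes "f \<in> VV P" "f' \<in> VV P"
  shows "dV P leq p (fscale c f) (fscale c' f') \<le> \<bar>c - c'\<bar> * rho P leq p f + \<bar>c'\<bar> * dV P leq p f f'"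
proof -
  have "(\<lambda>x. fscale c f x - fscale c' f' x) = (\<lambda>x. (c - c') * f x + c' * (f x - f' x))"
    by (simp add: fscale_def fun_eq_iff algebra_simps)
  then have "dV P leq p (fscale c f) (fscale c' f') = rho P leq p (\<lambda>x. (c - c') * f x + c' * (f x - f' x))"
    by (simp add: dV_def)
  also have "\<dots> \<le> rho P leq p (\<lambda>x. (c - c') * f x) + rho P leq p (\<lambda>x. c' * (f x - f' x))"
    by (rule rho_add) (use VV_scale[OF assms(1)] VV_scale[OF VV_diff[OF assms]] VV_fin in auto)
  also have "\<dots> = \<bar>c - c'\<bar> * rho P leq p f + \<bar>c'\<bar> * dV P leq p f f'"
    unfolding dV_def
    using rho_scale[OF VV_fin[OF assms(1)], of P leq p "c - c'"] rho_scale[OF VV_fin[OF VV_diff[OF assms]], of P leq p c']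
    by simp
  finally show ?thesis .
qed

lemma dV_convex_le:
  assumes "f \<in> VV P" "g \<in> VV P" "0 \<le> t" "t \<le> 1"
  shows "dV P leq p fzero (fadd (fscale t f) (fscale (1 - t) g)) \<le> t * dV P leq p fzero f + (1 - t) * dV P leq p fzero g"
proof -
  have "(\<lambda>x. fzero x - fadd (fscale t f) (fscale (1 - t) g) x) = (\<lambda>x. t * (0 - f x) + (1 - t) * (0 - g x))"
    by (simp add: fzero_def fadd_def fscale_def fun_eq_iff algebra_simps)
  then have "dV P leq p fzero (fadd (fscale t f) (fscale (1 - t) g)) = rho P leq p (\<lambda>x. t * (0 - f x) + (1 - t) * (0 - g x))"
    by (simp add: dV_def)
  also have "\<dots> \<le> rho P leq p (\<lambda>x. t * (0 - f x)) + rho P leq p (\<lambda>x. (1 - t) * (0 - g x))"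
    by (rule rho_add) (use VV_scale[OF VV_diff[OF VV_zero assms(1)]] VV_scale[OF VV_diff[OF VV_zero assms(2)]] VV_fin in auto)
  also have "\<dots> = t * dV P leq p fzero f + (1 - t) * dV P leq p fzero g"
    unfolding dV_def fzero_def
    using rho_scale[OF VV_fin[OF VV_diff[OF VV_zero assms(1)]], of P leq p t]
      rho_scale[OF VV_fin[OF VV_diff[OF VV_zero assms(2)]], of P leq p "1 - t"] assms(3,4)
    by simp
  finally show ?thesis .
qed

lemma fzero_VV: "fzero \<in> VV P"
  using VV_zero by (simp add: fzero_def)

lemma part4:
  fixes P :: "'a set"
  assumes dir: "directed_set P leq"
  shows "\<exists>(V :: ('a univ \<Rightarrow> real) set) (T :: ('a univ \<Rightarrow> real) topology).
        locally_convex_tvs V T \<and> tychonoff_space T \<and>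
        tukey_eq (times_omega P) (times_omega_le leq) (nbhds T {fzero}) rev_incl"
proof (intro exI[of _ "VV P"] exI[of _ "ptop P (dV P leq) (VV P)"] conjI)
  let ?T = "ptop P (dV P leq) (VV P)"
  let ?B = "pball (dV P leq) (VV P)"
  have pf: "pfam P (dV P leq) (VV P)" using pfam_V[OF dir] .
  have op: "openin ?T U \<longleftrightarrow> U \<subseteq> VV P \<and> (\<forall>x\<in>U. \<exists>i\<in>P. \<exists>r>0. ?B i x r \<subseteq> U)" for U
    using openin_ptop[OF pf] .
  have ball_open: "openin ?T (?B p a r)" if "p \<in> P" "a \<in> VV P" for p a r
    using pball_open[OF pf that] .
  have tT: "topspace ?T = VV P" using topspace_ptop[OF pf] .
  have dnn: "0 \<le> dV P leq p f g" for p f g by (simp add: dV_def rho_nonneg)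
  show "tychonoff_space ?T" using tychonoff_ptop[OF pf sep_V[OF dir]] .
  show "locally_convex_tvs (VV P) ?T"
    unfolding locally_convex_tvs_def
  proof (intro conjI allI impI ballI)
    show "fzero \<in> VV P" by (rule fzero_VV)
    show "\<And>f g. f \<in> VV P \<Longrightarrow> g \<in> VV P \<Longrightarrow> fadd f g \<in> VV P"
      by (simp add: fadd_def VV_add)
    show "\<And>c f. f \<in> VV P \<Longrightarrow> fscale c f \<in> VV P"
      by (simp add: fscale_def VV_scale)
    show "topspace ?T = VV P" by (fact tT)
  next
    show "continuous_map (prod_topology ?T ?T) ?T (\<lambda>(f, g). fadd f g)"
      unfolding continuous_map_def
    proof (intro conjI allI impI)
      show "(\<lambda>(f, g). fadd f g) \<in> topspace (prod_topology ?T ?T) \<rightarrow> topspace ?T"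
      proof (rule Pi_I)
        fix z assume z: "z \<in> topspace (prod_topology ?T ?T)"
        obtain f g where fg: "z = (f, g)" by (cases z)
        have "f \<in> VV P" "g \<in> VV P" using z fg tT by simp_all
        then show "(\<lambda>(f, g). fadd f g) z \<in> topspace ?T" using fg tT by (simp add: fadd_def VV_add)
      qed
      fix U assume U: "openin ?T U"
      show "openin (prod_topology ?T ?T) {x \<in> topspace (prod_topology ?T ?T). (case x of (f, g) \<Rightarrow> fadd f g) \<in> U}"
        unfolding openin_prod_topology_alt
      proof (intro allI impI)
        fix a b assume ab: "(a, b) \<in> {x \<in> topspace (prod_topology ?T ?T). (case x of (f, g) \<Rightarrow> fadd f g) \<in> U}"
        then have a: "a \<in> VV P" and b: "b \<in> VV P" and abU: "fadd a b \<in> U" using tT by auto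
        obtain p r where p: "p \<in> P" "r > 0" "?B p (fadd a b) r \<subseteq> U"
          using U abU unfolding op by blast
        have "?B p a (r/2) \<times> ?B p b (r/2) \<subseteq> {x \<in> topspace (prod_topology ?T ?T). (case x of (f, g) \<Rightarrow> fadd f g) \<in> U}"
        proof
          fix z assume "z \<in> ?B p a (r/2) \<times> ?B p b (r/2)"
          then obtain a' b' where zab: "z = (a', b')" and a': "a' \<in> VV P" "dV P leq p a a' < r/2"
            and b': "b' \<in> VV P" "dV P leq p b b' < r/2" by (auto simp: pball_def)
          have "dV P leq p (fadd a b) (fadd a' b') < r"
            using dV_add_le[OF a b a'(1) b'(1), of leq p] a'(2) b'(2) by linarith
          moreover have "fadd a' b' \<in> VV P" using a'(1) b'(1) by (simp add: fadd_def VV_add)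
          ultimately have "fadd a' b' \<in> U" using p(3) by (auto simp: pball_def)
          then show "z \<in> {x \<in> topspace (prod_topology ?T ?T). (case x of (f, g) \<Rightarrow> fadd f g) \<in> U}"
            using zab a'(1) b'(1) tT by auto
        qed
        moreover have "a \<in> ?B p a (r/2)" "b \<in> ?B p b (r/2)"
          using pball_centre[OF pf p(1) a] pball_centre[OF pf p(1) b] p(2) by auto
        ultimately show "\<exists>U' V'. openin ?T U' \<and> openin ?T V' \<and> a \<in> U' \<and> b \<in> V' \<and> U' \<times> V' \<subseteq> {x \<in> topspace (prod_topology ?T ?T). (case x of (f, g) \<Rightarrow> fadd f g) \<in> U}"
          using ball_open[OF p(1) a, of "r/2"] ball_open[OF p(1) b, of "r/2"]
          by (intro exI[of _ "?B p a (r/2)"] exI[of _ "?B p b (r/2)"] conjI)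
      qed
    qed
  next
    show "continuous_map (prod_topology euclideanreal ?T) ?T (\<lambda>(c, f). fscale c f)"
      unfolding continuous_map_def
    proof (intro conjI allI impI)
      show "(\<lambda>(c, f). fscale c f) \<in> topspace (prod_topology euclideanreal ?T) \<rightarrow> topspace ?T"
      proof (rule Pi_I)
        fix z assume z: "z \<in> topspace (prod_topology euclideanreal ?T)"
        obtain c f where cf: "z = (c, f)" by (cases z)
        have "f \<in> VV P" using z cf tT by simp
        then show "(\<lambda>(c, f). fscale c f) z \<in> topspace ?T" using cf tT by (simp add: fscale_def VV_scale)
      qed
      fix U assume U: "openin ?T U"
      show "openin (prod_topology euclideanreal ?T) {x \<in> topspace (prod_topology euclideanreal ?T). (case x of (c, f) \<Rightarrow> fscale c f) \<in> U}"
        unfolding openin_prod_topology_alt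
      proof (intro allI impI)
        fix c f assume cf: "(c, f) \<in> {x \<in> topspace (prod_topology euclideanreal ?T). (case x of (c, f) \<Rightarrow> fscale c f) \<in> U}"
        then have f: "f \<in> VV P" and cfU: "fscale c f \<in> U" using tT by auto
        obtain p r where p: "p \<in> P" "r > 0" "?B p (fscale c f) r \<subseteq> U"
          using U cfU unfolding op by blast
        define M where "M = rho P leq p f"
        have M0: "0 \<le> M" by (simp add: M_def rho_nonneg)
        define \<delta> where "\<delta> = min 1 (r / (M + \<bar>c\<bar> + 2))"
        have den: "M + \<bar>c\<bar> + 2 > 0" using M0 by simp
        have d0: "\<delta> > 0" using p(2) den by (simp add: \<delta>_def)
        have d1: "\<delta> \<le> 1" by (simp add: \<delta>_def)
        have d2: "\<delta> * (M + \<bar>c\<bar> + 2) \<le> r"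
        proof -
          have "\<delta> \<le> r / (M + \<bar>c\<bar> + 2)" by (simp add: \<delta>_def)
          then show ?thesis using den by (simp add: pos_le_divide_eq)
        qed
        have "ball c \<delta> \<times> ?B p f \<delta> \<subseteq> {x \<in> topspace (prod_topology euclideanreal ?T). (case x of (c, f) \<Rightarrow> fscale c f) \<in> U}"
        proof
          fix z assume "z \<in> ball c \<delta> \<times> ?B p f \<delta>"
          then obtain c' f' where zcf: "z = (c', f')" and c': "\<bar>c - c'\<bar> < \<delta>"
            and f': "f' \<in> VV P" "dV P leq p f f' < \<delta>" by (auto simp: pball_def dist_real_def)
          have le: "dV P leq p (fscale c f) (fscale c' f') \<le> \<bar>c - c'\<bar> * M + \<bar>c'\<bar> * dV P leq p f f'"
            using dV_scale_le[OF f f'(1), of leq p c c'] by (simp add: M_def)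
          have "\<bar>c - c'\<bar> * M \<le> \<delta> * M" using c' M0 by (simp add: mult_right_mono)
          moreover have "\<bar>c'\<bar> \<le> \<bar>c\<bar> + 1" using c' d1 by linarith
          then have "\<bar>c'\<bar> * dV P leq p f f' \<le> (\<bar>c\<bar> + 1) * dV P leq p f f'"
            using dnn by (simp add: mult_right_mono)
          moreover have "(\<bar>c\<bar> + 1) * dV P leq p f f' < (\<bar>c\<bar> + 1) * \<delta>"
            using f'(2) by (simp add: mult_strict_left_mono add_pos_nonneg)
          ultimately have "dV P leq p (fscale c f) (fscale c' f') < \<delta> * M + (\<bar>c\<bar> + 1) * \<delta>"
            using le by linarith
          also have "\<dots> < \<delta> * (M + \<bar>c\<bar> + 2)" using d0 by (simp add: algebra_simps)
          also have "\<dots> \<le> r" by (fact d2)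
          finally have "dV P leq p (fscale c f) (fscale c' f') < r" .
          moreover have "fscale c' f' \<in> VV P" using f'(1) by (simp add: fscale_def VV_scale)
          ultimately have "fscale c' f' \<in> U" using p(3) by (auto simp: pball_def)
          then show "z \<in> {x \<in> topspace (prod_topology euclideanreal ?T). (case x of (c, f) \<Rightarrow> fscale c f) \<in> U}"
            using zcf f'(1) tT by auto
        qed
        moreover have "c \<in> ball c \<delta>" using d0 by simp
        moreover have "f \<in> ?B p f \<delta>" using pball_centre[OF pf p(1) f d0] .
        moreover have "openin euclideanreal (ball c \<delta>)" by simp
        ultimately show "\<exists>U' V'. openin euclideanreal U' \<and> openin ?T V' \<and> c \<in> U' \<and> f \<in> V' \<and> U' \<times> V' \<subseteq> {x \<in> topspace (prod_topology euclideanreal ?T). (case x of (c, f) \<Rightarrow> fscale c f) \<in> U}"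
          using ball_open[OF p(1) f, of \<delta>]
          by (intro exI[of _ "ball c \<delta>"] exI[of _ "?B p f \<delta>"] conjI)
      qed
    qed
  next
    fix U assume U: "openin ?T U \<and> fzero \<in> U"
    then obtain p r where p: "p \<in> P" "r > 0" "?B p fzero r \<subseteq> U"
      unfolding op by blast
    have "convex_in (?B p fzero r)"
      unfolding convex_in_def
    proof (intro ballI allI impI)
      fix f g and t :: real assume f: "f \<in> ?B p fzero r" and g: "g \<in> ?B p fzero r" and t: "0 \<le> t \<and> t \<le> 1"
      have fV: "f \<in> VV P" and gV: "g \<in> VV P" using f g by (auto simp: pball_def)
      have "dV P leq p fzero (fadd (fscale t f) (fscale (1 - t) g)) \<le> t * dV P leq p fzero f + (1 - t) * dV P leq p fzero g"
        using dV_convex_le[OF fV gV] t by blast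
      also have "\<dots> < r"
        by (rule convex_bound_lt) (use f g t in \<open>auto simp: pball_def\<close>)
      finally have "dV P leq p fzero (fadd (fscale t f) (fscale (1 - t) g)) < r" .
      moreover have "fadd (fscale t f) (fscale (1 - t) g) \<in> VV P"
        using fV gV by (simp add: fadd_def fscale_def VV_add VV_scale)
      ultimately show "fadd (fscale t f) (fscale (1 - t) g) \<in> ?B p fzero r" by (simp add: pball_def)
    qed
    moreover have "fzero \<in> ?B p fzero r" using pball_centre[OF pf p(1) fzero_VV p(2)] .
    ultimately show "\<exists>W. openin ?T W \<and> fzero \<in> W \<and> W \<subseteq> U \<and> convex_in W"
      using ball_open[OF p(1) fzero_VV, of r] p(3) by blast
  qed
  show "tukey_eq (times_omega P) (times_omega_le leq) (nbhds ?T {fzero}) rev_incl"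
  proof (rule tukey_eq_embed[where B = "\<lambda>(p, n). ?B p fzero (1 / (real n + 1))"])
    show "\<forall>pn\<in>times_omega P. (case pn of (p, n) \<Rightarrow> ?B p fzero (1 / (real n + 1))) \<in> nbhds ?T {fzero}"
    proof
      fix pn assume "pn \<in> times_omega P"
      then obtain p n where pn: "pn = (p, n)" "p \<in> P" by (auto simp: times_omega_def)
      have "fzero \<in> ?B p fzero (1 / (real n + 1))"
        using pball_centre[OF pf pn(2) fzero_VV] by simp
      then show "(case pn of (p, n) \<Rightarrow> ?B p fzero (1 / (real n + 1))) \<in> nbhds ?T {fzero}"
        using ball_open[OF pn(2) fzero_VV] pn(1) by (simp add: nbhds_def)
    qed
    show "\<forall>pn\<in>times_omega P. \<forall>pn'\<in>times_omega P. times_omega_le leq pn pn' \<longrightarrow>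
        rev_incl (case pn of (p, n) \<Rightarrow> ?B p fzero (1 / (real n + 1))) (case pn' of (p, n) \<Rightarrow> ?B p fzero (1 / (real n + 1)))"
    proof (intro ballI impI)
      fix pn pn' assume "pn \<in> times_omega P" "pn' \<in> times_omega P" and le: "times_omega_le leq pn pn'"
      then obtain p n p' n' where pn: "pn = (p, n)" "pn' = (p', n')" "p \<in> P" "p' \<in> P"
        by (auto simp: times_omega_def)
      have le2: "leq p p'" "n \<le> n'" using le pn by (auto simp: times_omega_le_def)
      have sub: "DnV P leq p \<subseteq> DnV P leq p'" using DnV_mono[OF dir pn(3,4) le2(1)] .
      have "1 / (real n' + 1) \<le> 1 / (real n + 1)" using le2(2) by (simp add: frac_le)
      have "?B p' fzero (1 / (real n' + 1)) \<subseteq> ?B p fzero (1 / (real n + 1))"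
      proof
        fix h assume h: "h \<in> ?B p' fzero (1 / (real n' + 1))"
        then have hV: "h \<in> VV P" by (simp add: pball_def)
        have "dV P leq p fzero h \<le> dV P leq p' fzero h"
          unfolding dV_def by (rule rho_mono[OF _ sub]) (use VV_fin VV_diff[OF fzero_VV hV] in blast)
        then show "h \<in> ?B p fzero (1 / (real n + 1))"
          using h \<open>1 / (real n' + 1) \<le> 1 / (real n + 1)\<close> by (simp add: pball_def)
      qed
      then show "rev_incl (case pn of (p, n) \<Rightarrow> ?B p fzero (1 / (real n + 1))) (case pn' of (p, n) \<Rightarrow> ?B p fzero (1 / (real n + 1)))"
        using pn by (simp add: rev_incl_def)
    qed
    show "\<forall>pn\<in>times_omega P. \<forall>pn'\<in>times_omega P.
        rev_incl (case pn of (p, n) \<Rightarrow> ?B p fzero (1 / (real n + 1))) (case pn' of (p, n) \<Rightarrow> ?B p fzero (1 / (real n + 1)))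
        \<longrightarrow> times_omega_le leq pn pn'"
    proof (intro ballI impI)
      fix pn pn' assume "pn \<in> times_omega P" "pn' \<in> times_omega P"
        and s: "rev_incl (case pn of (p, n) \<Rightarrow> ?B p fzero (1 / (real n + 1))) (case pn' of (p, n) \<Rightarrow> ?B p fzero (1 / (real n + 1)))"
      then obtain p n p' n' where pn: "pn = (p, n)" "pn' = (p', n')" "p \<in> P" "p' \<in> P"
        by (auto simp: times_omega_def)
      have sub: "?B p' fzero (1 / (real n' + 1)) \<subseteq> ?B p fzero (1 / (real n + 1))"
        using s pn by (simp add: rev_incl_def)
      define h where "h c = (\<lambda>x. if x = ptY p then c else (0::real))" for c
      have hV: "h c \<in> VV P" for c
      proof -
        have "supp (h c) \<subseteq> {ptY p}" by (auto simp: h_def supp_def)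
        then show ?thesis using pn(3) by (auto simp: VV_def intro: finite_subset)
      qed
      have dh: "dV P leq q fzero (h c) = (if leq p q then \<bar>c\<bar> else 0)" for q c
      proof -
        have "dV P leq q fzero (h c) = rho P leq q (\<lambda>x. - h c x)" by (simp add: dV_def fzero_def)
        also have "\<dots> = rho P leq q (h c)" by (rule rho_neg)
        also have "\<dots> = (if leq p q then \<bar>c\<bar> else 0)"
          unfolding h_def rho_single ptY_in_DnV using pn(3) by simp
        finally show ?thesis .
      qed
      have pos: "0 < 1 / (real n' + 1)" "0 < 1 / (real n + 1)" by simp_all
      have "leq p p'"
      proof (rule ccontr)
        assume np: "\<not> leq p p'"
        have "h 1 \<in> ?B p' fzero (1 / (real n' + 1))"
          using hV dh np pos by (simp add: pball_def)
        then have "h 1 \<in> ?B p fzero (1 / (real n + 1))" using sub by blast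
        then have "dV P leq p fzero (h 1) < 1 / (real n + 1)" by (simp add: pball_def)
        moreover have "dV P leq p fzero (h 1) = 1" using dh directedD(2)[OF dir pn(3)] by simp
        moreover have "1 / (real n + 1) \<le> 1" by simp
        ultimately show False by linarith
      qed
      moreover have "n \<le> n'"
      proof (rule ccontr)
        assume "\<not> n \<le> n'"
        then have lt: "1 / (real n + 1) < 1 / (real n' + 1)" by (simp add: frac_less2)
        have "dV P leq p' fzero (h (1 / (real n + 1))) = 1 / (real n + 1)"
          using dh \<open>leq p p'\<close> by simp
        then have "h (1 / (real n + 1)) \<in> ?B p' fzero (1 / (real n' + 1))"
          using hV lt by (simp add: pball_def)
        then have "h (1 / (real n + 1)) \<in> ?B p fzero (1 / (real n + 1))" using sub by blast
        moreover have "dV P leq p fzero (h (1 / (real n + 1))) = 1 / (real n + 1)"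
          using dh directedD(2)[OF dir pn(3)] by simp
        ultimately show False by (simp add: pball_def)
      qed
      ultimately show "times_omega_le leq pn pn'" using pn by (simp add: times_omega_le_def)
    qed
    show "\<forall>q\<in>nbhds ?T {fzero}. \<exists>pn\<in>times_omega P. rev_incl q (case pn of (p, n) \<Rightarrow> ?B p fzero (1 / (real n + 1)))"
    proof
      fix N assume N: "N \<in> nbhds ?T {fzero}"
      then have "openin ?T N" "fzero \<in> N" by (auto simp: nbhds_def)
      then obtain p r where p: "p \<in> P" "r > 0" "?B p fzero r \<subseteq> N"
        unfolding op by blast
      obtain m :: nat where m: "m > 0" "inverse (real m) < r" using ex_inverse_of_nat_less[OF p(2)] by blast
      have eq: "1 / (real (m - 1) + 1) = inverse (real m)" using m(1) by (simp add: of_nat_diff divide_inverse)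
      have "?B p fzero (1 / (real (m - 1) + 1)) \<subseteq> ?B p fzero r"
        using m(2) unfolding eq by (auto simp: pball_def)
      then have "rev_incl N (?B p fzero (1 / (real (m - 1) + 1)))" using p(3) by (auto simp: rev_incl_def)
      moreover have "(p, m - 1) \<in> times_omega P" using p(1) by (simp add: times_omega_def)
      ultimately show "\<exists>pn\<in>times_omega P. rev_incl N (case pn of (p, n) \<Rightarrow> ?B p fzero (1 / (real n + 1)))"
        by force
    qed
  qed (rule rev_incl_trans)
qed

theorem mainTheorem1:
  fixes P :: "'a set" and leq :: "'a \<Rightarrow> 'a \<Rightarrow> bool"
  assumes "directed_set P leq"
  shows
    "(\<exists>X :: 'a univ topology.
        tychonoff_space X \<and> locally_compact_space X \<and> Hausdorff_space X \<and>
        tukey_eq P leq (compact_sets X) (\<subseteq>))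
   \<and> (\<exists>(K :: 'a univ topology) x.
        tychonoff_space K \<and> compact_space K \<and> Hausdorff_space K \<and> x \<in> topspace K \<and>
        tukey_eq P leq (nbhds K {x}) rev_incl)
   \<and> (\<exists>(G :: 'a univ monoid) (T :: 'a univ topology).
        topological_group G T \<and> tychonoff_space T \<and>
        tukey_eq P leq (nbhds T {\<one>\<^bsub>G\<^esub>}) rev_incl)
   \<and> (\<exists>(V :: ('a univ \<Rightarrow> real) set) (T :: ('a univ \<Rightarrow> real) topology).
        locally_convex_tvs V T \<and> tychonoff_space T \<and>
        tukey_eq (times_omega P) (times_omega_le leq) (nbhds T {fzero}) rev_incl)
   \<and> (\<exists>(Y :: 'a univ topology) \<U>.
        tychonoff_space Y \<and> universal_uniformity Y \<U> \<and>
        tukey_eq P leq \<U> rev_incl)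
   \<and> (\<exists>Y :: 'a univ topology.
        tychonoff_space Y \<and>
        tukey_eq P leq (nbhds (prod_topology Y Y) (diagonal Y)) rev_incl)"
proof -
  have h12: "(\<exists>X :: 'a univ topology.
        tychonoff_space X \<and> locally_compact_space X \<and> Hausdorff_space X \<and>
        tukey_eq P leq (compact_sets X) (\<subseteq>))
   \<and> (\<exists>(K :: 'a univ topology) x.
        tychonoff_space K \<and> compact_space K \<and> Hausdorff_space K \<and> x \<in> topspace K \<and>
        tukey_eq P leq (nbhds K {x}) rev_incl)" by (rule part12[OF assms])
  show ?thesis using h12 part3[OF assms] part4[OF assms] part5[OF assms] part6[OF assms] by blast
qed

end
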